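(* Let $n>1$, let $w$ be a primitive $n$-th root of unity and $c\in\mathbb{C}$, and let $f(h)=wh+c$. Then every simple (left) $\mathcal{H}(f)$-module is finite-dimensional. For $f=wh$, every finite-dimensional simple $\mathcal{H}(wh)$-module is isomorphic to one of: (a) the one-dimensional module $\mathbb{C}v$ with $xv=av$, $hv=0$, $yv=bv$ for some $a,b\in\mathbb{C}$; (b) $\mathbb{C}[t]/(t^n-a)$ with $ht^i=bw^it^i$, $xt^i=t^{i+1}$, $yt^i=(bw^i+\dot z)t^{i-1}$, for some $a,b\in\mathbb{C}^*$, $\dot z\in\mathbb{C}$; (c) $\mathbb{C}[t]/(t^n-a)$ with $ht^i=bw^it^i$, $xt^i=b(w^{i+1}-w^j)t^{i+1}$, $yt^i=t^{i-1}$, for some $a,b\in\mathbb{C}^*$ and $j\in\mathbb{Z}$; (d) $\mathbb{C}[t]/(t^n)$ with $yt^i=(1-w^i)\dot zt^{i-1}$, $ht^i=-w^i\dot zt^i$, $xt^i=t^{i+1}$ ($0\le i\le n-1$, $t^n=0$) for some $\dot z\in\mathbb{C}^*$. (In (b),(c) the indices are read modulo $n$ using $t^n=a$.)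
   Context: For $f(h)\in\mathbb{C}[h]$, $\mathcal{H}(f)$ is the unital associative $\mathbb{C}$-algebra generated by $x,y,h$ with relations $hx=xf(h)$, $yh=f(h)y$, $yx-xy=f(h)-h$. *)

theory Defs
  imports Complex_Main "HOL-Computational_Algebra.Polynomial"
begin

text \<open>A (left) module over H(f) is modelled as a complex subspace V of a complex vector
  space (scalar multiplication sc) with three linear operators X, Y, H (actions of x, y, h)
  preserving V and satisfying the defining relations of H(f) as operator identities on V.\<close>

definition op_poly :: "(complex \<Rightarrow> 'v::ab_group_add \<Rightarrow> 'v) \<Rightarrow> complex poly \<Rightarrow> ('v \<Rightarrow> 'v) \<Rightarrow> 'v \<Rightarrow> 'v" where
  "op_poly sc p T v = (\<Sum>i\<le>degree p. sc (coeff p i) ((T ^^ i) v))"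

definition lin_op_on :: "(complex \<Rightarrow> 'v::ab_group_add \<Rightarrow> 'v) \<Rightarrow> 'v set \<Rightarrow> ('v \<Rightarrow> 'v) \<Rightarrow> bool" where
  "lin_op_on sc V T \<longleftrightarrow> (\<forall>v\<in>V. T v \<in> V) \<and> (\<forall>u\<in>V. \<forall>v\<in>V. T (u + v) = T u + T v)
     \<and> (\<forall>c. \<forall>v\<in>V. T (sc c v) = sc c (T v))"

definition H_module :: "(complex \<Rightarrow> 'v::ab_group_add \<Rightarrow> 'v) \<Rightarrow> 'v set \<Rightarrow> complex poly
    \<Rightarrow> ('v \<Rightarrow> 'v) \<Rightarrow> ('v \<Rightarrow> 'v) \<Rightarrow> ('v \<Rightarrow> 'v) \<Rightarrow> bool" where
  "H_module sc V f X Y H \<longleftrightarrow> vector_space sc \<and> module.subspace sc V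
     \<and> lin_op_on sc V X \<and> lin_op_on sc V Y \<and> lin_op_on sc V H
     \<and> (\<forall>v\<in>V. H (X v) = X (op_poly sc f H v))
     \<and> (\<forall>v\<in>V. Y (H v) = op_poly sc f H (Y v))
     \<and> (\<forall>v\<in>V. Y (X v) - X (Y v) = op_poly sc f H v - H v)"

definition H_simple :: "(complex \<Rightarrow> 'v::ab_group_add \<Rightarrow> 'v) \<Rightarrow> 'v set
    \<Rightarrow> ('v \<Rightarrow> 'v) \<Rightarrow> ('v \<Rightarrow> 'v) \<Rightarrow> ('v \<Rightarrow> 'v) \<Rightarrow> bool" where
  "H_simple sc V X Y H \<longleftrightarrow> V \<noteq> {0} \<and>
     (\<forall>W. W \<subseteq> V \<and> module.subspace sc W \<and> (\<forall>w\<in>W. X w \<in> W \<and> Y w \<in> W \<and> H w \<in> W)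
        \<longrightarrow> W = {0} \<or> W = V)"

definition fin_dim :: "(complex \<Rightarrow> 'v::ab_group_add \<Rightarrow> 'v) \<Rightarrow> 'v set \<Rightarrow> bool" where
  "fin_dim sc V \<longleftrightarrow> (\<exists>B. finite B \<and> B \<subseteq> V \<and> module.span sc B = V)"

definition H_iso :: "(complex \<Rightarrow> 'u::ab_group_add \<Rightarrow> 'u) \<Rightarrow> 'u set \<Rightarrow> ('u \<Rightarrow> 'u) \<Rightarrow> ('u \<Rightarrow> 'u) \<Rightarrow> ('u \<Rightarrow> 'u)
    \<Rightarrow> (complex \<Rightarrow> 'v::ab_group_add \<Rightarrow> 'v) \<Rightarrow> 'v set \<Rightarrow> ('v \<Rightarrow> 'v) \<Rightarrow> ('v \<Rightarrow> 'v) \<Rightarrow> ('v \<Rightarrow> 'v) \<Rightarrow> bool" where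
  "H_iso sc1 V1 X1 Y1 H1 sc2 V2 X2 Y2 H2 \<longleftrightarrow> (\<exists>\<phi>. bij_betw \<phi> V1 V2
     \<and> (\<forall>u\<in>V1. \<forall>v\<in>V1. \<phi> (u + v) = \<phi> u + \<phi> v)
     \<and> (\<forall>c. \<forall>v\<in>V1. \<phi> (sc1 c v) = sc2 c (\<phi> v))
     \<and> (\<forall>v\<in>V1. \<phi> (X1 v) = X2 (\<phi> v) \<and> \<phi> (Y1 v) = Y2 (\<phi> v) \<and> \<phi> (H1 v) = H2 (\<phi> v)))"

definition primitive_root_of_unity :: "nat \<Rightarrow> complex \<Rightarrow> bool" where
  "primitive_root_of_unity n w \<longleftrightarrow> w ^ n = 1 \<and> (\<forall>k. 0 < k \<and> k < n \<longrightarrow> w ^ k \<noteq> 1)"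

text \<open>Model modules: C[t]/(g) with deg g = n is represented by the remainders, i.e. the
  polynomials of degree < n (basis t^0,...,t^(n-1)), with scalar multiplication smult.\<close>

definition polys_below :: "nat \<Rightarrow> complex poly set" where
  "polys_below n = {p. degree p < n}"

definition lin_ext :: "nat \<Rightarrow> (nat \<Rightarrow> complex poly) \<Rightarrow> complex poly \<Rightarrow> complex poly" where
  "lin_ext n g p = (\<Sum>j<n. smult (coeff p j) (g j))"

text \<open>t^k (k an integer) in C[t]/(t^n - a), a nonzero: t^k = a^(k div n) t^(k mod n).\<close>
definition qpow :: "nat \<Rightarrow> complex \<Rightarrow> int \<Rightarrow> complex poly" where
  "qpow n a k = smult (a powi (k div n)) (monom 1 (nat (k mod n)))"

definition modA_X :: "complex \<Rightarrow> complex poly \<Rightarrow> complex poly" where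
  "modA_X a = lin_ext 1 (\<lambda>j. smult a (monom 1 0))"
definition modA_H :: "complex poly \<Rightarrow> complex poly" where
  "modA_H = lin_ext 1 (\<lambda>j. 0)"
definition modA_Y :: "complex \<Rightarrow> complex poly \<Rightarrow> complex poly" where
  "modA_Y b = lin_ext 1 (\<lambda>j. smult b (monom 1 0))"

definition modB_H :: "nat \<Rightarrow> complex \<Rightarrow> complex \<Rightarrow> complex \<Rightarrow> complex poly \<Rightarrow> complex poly" where
  "modB_H n w a b = lin_ext n (\<lambda>i. smult (b * w ^ i) (qpow n a (int i)))"
definition modB_X :: "nat \<Rightarrow> complex \<Rightarrow> complex \<Rightarrow> complex \<Rightarrow> complex poly \<Rightarrow> complex poly" where
  "modB_X n w a b = lin_ext n (\<lambda>i. qpow n a (int i + 1))"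
definition modB_Y :: "nat \<Rightarrow> complex \<Rightarrow> complex \<Rightarrow> complex \<Rightarrow> complex \<Rightarrow> complex poly \<Rightarrow> complex poly" where
  "modB_Y n w a b z = lin_ext n (\<lambda>i. smult (b * w ^ i + z) (qpow n a (int i - 1)))"

definition modC_H :: "nat \<Rightarrow> complex \<Rightarrow> complex \<Rightarrow> complex \<Rightarrow> complex poly \<Rightarrow> complex poly" where
  "modC_H n w a b = lin_ext n (\<lambda>i. smult (b * w ^ i) (qpow n a (int i)))"
definition modC_X :: "nat \<Rightarrow> complex \<Rightarrow> complex \<Rightarrow> complex \<Rightarrow> int \<Rightarrow> complex poly \<Rightarrow> complex poly" where
  "modC_X n w a b j = lin_ext n (\<lambda>i. smult (b * (w ^ (i + 1) - w powi j)) (qpow n a (int i + 1)))"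
definition modC_Y :: "nat \<Rightarrow> complex \<Rightarrow> complex \<Rightarrow> complex poly \<Rightarrow> complex poly" where
  "modC_Y n w a = lin_ext n (\<lambda>i. qpow n a (int i - 1))"

definition modD_Y :: "nat \<Rightarrow> complex \<Rightarrow> complex \<Rightarrow> complex poly \<Rightarrow> complex poly" where
  "modD_Y n w z = lin_ext n (\<lambda>i. if i = 0 then 0 else smult ((1 - w ^ i) * z) (monom 1 (i - 1)))"
definition modD_H :: "nat \<Rightarrow> complex \<Rightarrow> complex \<Rightarrow> complex poly \<Rightarrow> complex poly" where
  "modD_H n w z = lin_ext n (\<lambda>i. smult (- (w ^ i) * z) (monom 1 i))"
definition modD_X :: "nat \<Rightarrow> complex poly \<Rightarrow> complex poly" where
  "modD_X n = lin_ext n (\<lambda>i. if i + 1 < n then monom 1 (i + 1) else 0)"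

end

theory Submission
  imports Defs "HOL-Computational_Algebra.Fundamental_Theorem_Algebra"
    "HOL-Library.Countable_Set" "HOL-Analysis.Continuum_Not_Denumerable"
begin

locale cvs = vector_space scale for scale :: "complex \<Rightarrow> 'v::ab_group_add \<Rightarrow> 'v" (infixr \<open>*s\<close> 75)
begin

lemma lin_zero: "subspace V \<Longrightarrow> lin_op_on scale V T \<Longrightarrow> T 0 = 0"
  unfolding lin_op_on_def
  by (metis add_cancel_right_right subspace_0)

lemma lin_scale: "lin_op_on scale V T \<Longrightarrow> v \<in> V \<Longrightarrow> T (c *s v) = c *s T v"
  unfolding lin_op_on_def by blast

lemma lin_add: "lin_op_on scale V T \<Longrightarrow> u \<in> V \<Longrightarrow> v \<in> V \<Longrightarrow> T (u + v) = T u + T v"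
  unfolding lin_op_on_def by blast

lemma lin_in: "lin_op_on scale V T \<Longrightarrow> v \<in> V \<Longrightarrow> T v \<in> V"
  unfolding lin_op_on_def by blast

lemma lin_diff: "subspace V \<Longrightarrow> lin_op_on scale V T \<Longrightarrow> u \<in> V \<Longrightarrow> v \<in> V \<Longrightarrow> T (u - v) = T u - T v"
proof -
  assume a: "subspace V" "lin_op_on scale V T" "u \<in> V" "v \<in> V"
  have "T (u - v) = T (u + (-1) *s v)" by simp
  also have "\<dots> = T u + (-1) *s T v" using a lin_add lin_scale subspace_scale by metis
  finally show ?thesis by simp
qed

lemma lin_sum: "subspace V \<Longrightarrow> lin_op_on scale V T \<Longrightarrow> (\<And>i. i \<in> A \<Longrightarrow> f i \<in> V)
   \<Longrightarrow> T (\<Sum>i\<in>A. f i) = (\<Sum>i\<in>A. T (f i))"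
proof (induction A rule: infinite_finite_induct)
  case (infinite A) then show ?case using lin_zero by simp
next
  case empty then show ?case using lin_zero by simp
next
  case (insert x F)
  then show ?case by (simp add: lin_add subspace_sum)
qed

lemma lin_pow: "lin_op_on scale V T \<Longrightarrow> lin_op_on scale V (T ^^ k)"
proof (induction k)
  case 0 then show ?case by (simp add: lin_op_on_def)
next
  case (Suc k) then show ?case by (simp add: lin_op_on_def)
qed

lemma lin_shift: "subspace V \<Longrightarrow> lin_op_on scale V T \<Longrightarrow> lin_op_on scale V (\<lambda>v. T v - c *s v)"
  unfolding lin_op_on_def
  by (auto simp: subspace_diff subspace_scale algebra_simps)

lemma op_poly_bound:
  assumes "degree p < N"
  shows "op_poly scale p T v = (\<Sum>i<N. coeff p i *s (T ^^ i) v)"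
proof -
  have "op_poly scale p T v = (\<Sum>i\<in>{..degree p}. coeff p i *s (T ^^ i) v)"
    by (simp add: op_poly_def)
  also have "\<dots> = (\<Sum>i<N. coeff p i *s (T ^^ i) v)"
    using assms by (intro sum.mono_neutral_left) (auto simp: coeff_eq_0)
  finally show ?thesis .
qed

lemma op_poly_in: "subspace V \<Longrightarrow> lin_op_on scale V T \<Longrightarrow> v \<in> V \<Longrightarrow> op_poly scale p T v \<in> V"
  unfolding op_poly_def
  by (intro subspace_sum) (auto intro!: subspace_scale lin_in[OF lin_pow])

lemma op_poly_add: "op_poly scale (p + q) T v = op_poly scale p T v + op_poly scale q T v"
proof -
  let ?N = "Suc (max (degree p) (degree q))"
  have "degree (p + q) < ?N" by (simp add: degree_add_le less_Suc_eq_le)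
  then show ?thesis
    by (simp add: op_poly_bound[where N="?N"] sum.distrib scale_left_distrib)
qed

lemma op_poly_smult: "op_poly scale (smult a p) T v = a *s op_poly scale p T v"
proof -
  let ?N = "Suc (degree p)"
  have "degree (smult a p) < ?N" by simp
  then have "op_poly scale (smult a p) T v = (\<Sum>i<?N. coeff (smult a p) i *s (T ^^ i) v)"
    by (rule op_poly_bound)
  also have "\<dots> = a *s (\<Sum>i<?N. coeff p i *s (T ^^ i) v)"
    by (simp add: scale_sum_right del: sum.lessThan_Suc)
  also have "(\<Sum>i<?N. coeff p i *s (T ^^ i) v) = op_poly scale p T v"
    by (rule op_poly_bound[symmetric]) simp
  finally show ?thesis .
qed

lemma op_poly_0: "op_poly scale 0 T v = 0"
  by (simp add: op_poly_def)

lemma op_poly_sum: "op_poly scale (\<Sum>i\<in>A. f i) T v = (\<Sum>i\<in>A. op_poly scale (f i) T v)"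
  by (induction A rule: infinite_finite_induct) (auto simp: op_poly_0 op_poly_add)

lemma op_poly_pCons:
  assumes V: "subspace V" "lin_op_on scale V T" "v \<in> V"
  shows "op_poly scale (pCons a p) T v = a *s v + T (op_poly scale p T v)"
proof -
  let ?M = "Suc (degree p)"
  have d: "degree (pCons a p) < Suc ?M" by (simp add: degree_pCons_le le_imp_less_Suc)
  have "op_poly scale (pCons a p) T v = (\<Sum>i<Suc ?M. coeff (pCons a p) i *s (T ^^ i) v)"
    by (rule op_poly_bound[OF d])
  also have "\<dots> = a *s v + (\<Sum>i<?M. coeff p i *s (T ^^ Suc i) v)"
    by (simp add: sum.lessThan_Suc_shift del: sum.lessThan_Suc)
  also have "(\<Sum>i<?M. coeff p i *s (T ^^ Suc i) v) = T (\<Sum>i<?M. coeff p i *s (T ^^ i) v)"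
    using V by (subst lin_sum) (auto intro!: subspace_scale lin_in[OF lin_pow] simp: lin_scale lin_in[OF lin_pow])
  also have "(\<Sum>i<?M. coeff p i *s (T ^^ i) v) = op_poly scale p T v"
    by (rule op_poly_bound[symmetric]) simp
  finally show ?thesis .
qed

lemma op_poly_pCons0:
  assumes V: "subspace V" "lin_op_on scale V T" "v \<in> V"
  shows "op_poly scale (pCons 0 p) T v = T (op_poly scale p T v)"
  using op_poly_pCons[OF V] by simp

lemma op_poly_const: "op_poly scale [:a:] T v = a *s v"
  by (simp add: op_poly_def)

lemma op_poly_mult:
  assumes V: "subspace V" "lin_op_on scale V T" "v \<in> V"
  shows "op_poly scale (p * q) T v = op_poly scale p T (op_poly scale q T v)"
proof (induction p rule: pCons_induct)
  case 0 then show ?case by (simp add: op_poly_0)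
next
  case (pCons a p)
  have inq: "op_poly scale q T v \<in> V" using op_poly_in V by blast
  have "op_poly scale (pCons a p * q) T v = a *s op_poly scale q T v + op_poly scale (pCons 0 (p * q)) T v"
    by (simp add: op_poly_add op_poly_smult)
  also have "op_poly scale (pCons 0 (p * q)) T v = T (op_poly scale (p*q) T v)"
    using op_poly_pCons0[OF V] by blast
  finally show ?case using pCons op_poly_pCons[OF V(1,2) inq] by simp
qed

lemma op_poly_eigen:
  assumes V: "subspace V" "lin_op_on scale V T" "e \<in> V" and e: "T e = \<mu> *s e"
  shows "op_poly scale p T e = poly p \<mu> *s e"
proof (induction p rule: pCons_induct)
  case 0 then show ?case by (simp add: op_poly_0)
next
  case (pCons a p)
  then show ?case using op_poly_pCons[OF V] e lin_scale[OF V(2,3)]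
    by (simp add: scale_left_distrib)
qed

lemma op_poly_vadd:
  assumes V: "subspace V" "lin_op_on scale V T" "u \<in> V" "v \<in> V"
  shows "op_poly scale p T (u + v) = op_poly scale p T u + op_poly scale p T v"
proof (induction p rule: pCons_induct)
  case 0 then show ?case by (simp add: op_poly_0)
next
  case (pCons a p)
  have uv: "u + v \<in> V" using V subspace_add by blast
  show ?case
    using op_poly_pCons[OF V(1,2) uv] op_poly_pCons[OF V(1,2,3)] op_poly_pCons[OF V(1,2,4)] pCons
      lin_add[OF V(2) op_poly_in[OF V(1,2,3)] op_poly_in[OF V(1,2,4)]]
    by (simp add: scale_right_distrib algebra_simps)
qed

lemma op_poly_vscale:
  assumes V: "subspace V" "lin_op_on scale V T" "v \<in> V"
  shows "op_poly scale p T (c *s v) = c *s op_poly scale p T v"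
proof (induction p rule: pCons_induct)
  case 0 then show ?case by (simp add: op_poly_0)
next
  case (pCons a p)
  have cv: "c *s v \<in> V" using V subspace_scale by blast
  show ?case
    using op_poly_pCons[OF V(1,2) cv] op_poly_pCons[OF V] pCons
      lin_scale[OF V(2) op_poly_in[OF V]]
    by (simp add: scale_right_distrib)
qed

lemma op_poly_vzero:
  assumes V: "subspace V" "lin_op_on scale V T"
  shows "op_poly scale p T 0 = 0"
  using op_poly_vscale[OF V subspace_0[OF V(1)], of p 0] by simp

lemma op_poly_vsum:
  assumes V: "subspace V" "lin_op_on scale V T" and f: "\<And>i. i \<in> A \<Longrightarrow> f i \<in> V"
  shows "op_poly scale p T (\<Sum>i\<in>A. c i *s f i) = (\<Sum>i\<in>A. c i *s op_poly scale p T (f i))"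
  using f
proof (induction A rule: infinite_finite_induct)
  case (infinite A) then show ?case by (simp add: op_poly_vzero[OF V])
next
  case empty then show ?case by (simp add: op_poly_vzero[OF V])
next
  case (insert x F)
  have s: "(\<Sum>i\<in>F. c i *s f i) \<in> V" using insert V by (auto intro!: subspace_sum subspace_scale)
  have x: "c x *s f x \<in> V" using insert V by (auto intro!: subspace_scale)
  show ?case using insert op_poly_vadd[OF V x s] op_poly_vscale[OF V] by simp
qed

lemma op_poly_inj:
  assumes V: "subspace V" "lin_op_on scale V T"
    and noeig: "\<And>\<mu> u. u \<in> V \<Longrightarrow> T u = \<mu> *s u \<Longrightarrow> u = 0"
  shows "p \<noteq> 0 \<Longrightarrow> v \<in> V \<Longrightarrow> op_poly scale p T v = 0 \<Longrightarrow> v = 0"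
proof (induction "degree p" arbitrary: p v rule: less_induct)
  case less
  show ?case
  proof (cases "degree p = 0")
    case True
    then obtain a where p: "p = [:a:]" by (metis degree_eq_zeroE)
    with less have "a \<noteq> 0" by auto
    with less p show ?thesis by (simp add: op_poly_const)
  next
    case False
    then have "\<not> constant (poly p)" using constant_degree[of p] by simp
    then obtain r where "poly p r = 0" using fundamental_theorem_of_algebra by blast
    then obtain q where pq: "p = [:-r,1:] * q" using poly_eq_0_iff_dvd by (metis dvdE)
    with less have q0: "q \<noteq> 0" by auto
    have "[:-r,1:] \<noteq> 0" by simp
    then have "degree p = degree [:-r,1:] + degree q" using pq q0 degree_mult_eq by metis
    then have dq: "degree q < degree p" by simp
    let ?u = "op_poly scale q T v"
    have uV: "?u \<in> V" using op_poly_in V less by blast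
    have "op_poly scale p T v = op_poly scale [:-r,1:] T ?u"
      unfolding pq by (rule op_poly_mult[OF V less(3)])
    also have "\<dots> = (-r) *s ?u + T ?u"
      using op_poly_pCons[OF V uV] by (simp add: op_poly_0 lin_zero[OF V])
    finally have "T ?u = r *s ?u" using less(4) by (simp add: add_eq_0_iff)
    then have "?u = 0" using noeig uV by blast
    then show ?thesis using less(1)[OF dq q0 less(3)] by blast
  qed
qed


lemma op_poly_lin1:
  assumes V: "subspace V" "lin_op_on scale V T" "u \<in> V"
  shows "op_poly scale [:a,1:] T u = a *s u + T u"
  using op_poly_pCons[OF V] by (simp add: op_poly_0 lin_zero[OF V(1,2)])

lemma indep_countable:
  assumes S: "countable S" and A: "A \<subseteq> span S" and ind: "independent A"
  shows "countable A"
proof -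
  have "A \<subseteq> (\<Union>F\<in>{F. finite F \<and> F \<subseteq> S}. A \<inter> span F)"
  proof
    fix a assume a: "a \<in> A"
    then have "a \<in> span S" using A by blast
    then obtain t r where t: "finite t" "t \<subseteq> S" "a = (\<Sum>x\<in>t. r x *s x)"
      unfolding span_explicit by blast
    have "a \<in> span t" unfolding t(3) by (intro span_sum span_scale span_base)
    then show "a \<in> (\<Union>F\<in>{F. finite F \<and> F \<subseteq> S}. A \<inter> span F)" using t a by blast
  qed
  moreover have "countable (\<Union>F\<in>{F. finite F \<and> F \<subseteq> S}. A \<inter> span F)"
  proof (rule countable_UN)
    show "countable {F. finite F \<and> F \<subseteq> S}" using countable_Collect_finite_subset[OF S] .
    fix F assume "F \<in> {F. finite F \<and> F \<subseteq> S}"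
    then have "finite F" by blast
    moreover have "independent (A \<inter> span F)" using independent_mono[OF ind] by blast
    ultimately have "finite (A \<inter> span F)" using independent_span_bound[of F "A \<inter> span F"] by blast
    then show "countable (A \<inter> span F)" by (rule countable_finite)
  qed
  ultimately show ?thesis using countable_subset by blast
qed

lemma op_poly_monom:
  assumes V: "subspace V" "lin_op_on scale V T" "v \<in> V"
  shows "op_poly scale (monom 1 k) T v = (T ^^ k) v"
proof (induction k)
  case 0 then show ?case by (simp add: op_poly_const monom_0)
next
  case (Suc k)
  have "monom (1::complex) (Suc k) = pCons 0 (monom 1 k)" by (simp add: monom_Suc)
  then show ?case using op_poly_pCons0[OF V] Suc by simp
qed


lemma comb1: "a *s z + b *s (c *s z) = (a + b * c) *s z"
  by (simp add: scale_left_distrib)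

lemma comb2: "A + a *s z - b *s (c *s z) = A + (a - b * c) *s z"
  by (simp add: scale_left_diff_distrib algebra_simps)

end


lemma qpow_lt: "i < n \<Longrightarrow> qpow n a (int i) = monom 1 i"
  unfolding qpow_def by (simp add: zdiv_int zmod_int)

lemma qpow_n: "0 < n \<Longrightarrow> qpow n a (int n) = smult a (monom 1 0)"
  unfolding qpow_def by simp

lemma qpow_m1: "0 < n \<Longrightarrow> qpow n a (-1) = smult (inverse a) (monom 1 (n - 1))"
proof -
  assume n: "0 < n"
  have d: "(-1::int) div int n = -1" using n
    by (simp add: div_eq_minus1 int_one_le_iff_zero_less)
  have m: "(-1::int) mod int n = int n - 1" using n
    by (simp add: zmod_minus1)
  show ?thesis unfolding qpow_def d m using n by (simp add: nat_diff_distrib power_int_minus)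
qed

lemma qpow_Suc: "Suc i < n \<Longrightarrow> qpow n a (int i + 1) = monom 1 (Suc i)"
  using qpow_lt[of "Suc i" n a] by (simp add: add.commute)

lemma qpow_last: "Suc i = n \<Longrightarrow> qpow n a (int i + 1) = smult a (monom 1 0)"
  using qpow_n[of n a] by (auto simp: add.commute)

lemma qpow_pred: "0 < i \<Longrightarrow> i < n \<Longrightarrow> qpow n a (int i - 1) = monom 1 (i - 1)"
  using qpow_lt[of "i - 1" n a] by (simp add: of_nat_diff)

lemma qpow_zero_m1: "0 < n \<Longrightarrow> qpow n a (int 0 - 1) = smult (inverse a) (monom 1 (n - 1))"
  using qpow_m1 by simp


locale hm = cvs sc for sc :: "complex \<Rightarrow> 'v::ab_group_add \<Rightarrow> 'v" (infixr \<open>*s\<close> 75) +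
  fixes V :: "'v set" and X Y H :: "'v \<Rightarrow> 'v" and w :: complex and n :: nat
  assumes subV: "subspace V" and linX: "lin_op_on sc V X" and linY: "lin_op_on sc V Y"
    and linH: "lin_op_on sc V H"
    and r1: "\<And>v. v \<in> V \<Longrightarrow> H (X v) = X (w *s H v)"
    and r2: "\<And>v. v \<in> V \<Longrightarrow> Y (H v) = w *s H (Y v)"
    and r3: "\<And>v. v \<in> V \<Longrightarrow> Y (X v) - X (Y v) = (w - 1) *s H v"
    and simple: "H_simple sc V X Y H"
    and n1: "1 < n" and prim: "primitive_root_of_unity n w"
begin

lemma invariant:
  assumes "W \<subseteq> V" "subspace W" "\<And>x. x \<in> W \<Longrightarrow> X x \<in> W \<and> Y x \<in> W \<and> H x \<in> W"
  shows "W = {0} \<or> W = V"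
  using simple assms unfolding H_simple_def by blast

lemma invariant_nz:
  assumes "W \<subseteq> V" "subspace W" "\<And>x. x \<in> W \<Longrightarrow> X x \<in> W \<and> Y x \<in> W \<and> H x \<in> W"
    "u \<in> W" "u \<noteq> 0"
  shows "W = V"
  using invariant[OF assms(1-3)] assms(4,5) by blast

lemma V_nz: "\<exists>v\<in>V. v \<noteq> 0"
proof -
  have "V \<noteq> {0}" using simple unfolding H_simple_def by blast
  moreover have "0 \<in> V" using subV subspace_0 by blast
  ultimately show ?thesis by blast
qed

lemma zV: "0 \<in> V" using subV subspace_0 by blast
lemma XV: "v \<in> V \<Longrightarrow> X v \<in> V" using linX lin_in by blast
lemma YV: "v \<in> V \<Longrightarrow> Y v \<in> V" using linY lin_in by blast
lemma HV: "v \<in> V \<Longrightarrow> H v \<in> V" using linH lin_in by blast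
lemma scV: "v \<in> V \<Longrightarrow> c *s v \<in> V" using subV subspace_scale by blast
lemma addV: "u \<in> V \<Longrightarrow> v \<in> V \<Longrightarrow> u + v \<in> V" using subV subspace_add by blast
lemma diffV: "u \<in> V \<Longrightarrow> v \<in> V \<Longrightarrow> u - v \<in> V" using subV subspace_diff by blast

lemma span_T:
  assumes T: "lin_op_on sc V T" and B: "B \<subseteq> V" and TB: "\<And>b. b \<in> B \<Longrightarrow> T b \<in> span B"
    and u: "u \<in> span B"
  shows "T u \<in> span B"
proof -
  have "u \<in> V \<and> T u \<in> span B"
    using u
  proof (induction rule: span_induct_alt)
    case base
    then show ?case using zV lin_zero[OF subV T] span_zero by auto
  next
    case (step c x y)
    have xV: "x \<in> V" using step B by blast
    have "T (c *s x + y) = c *s T x + T y"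
      using lin_add[OF T scV[OF xV]] lin_scale[OF T xV] step by simp
    then show ?case using step TB xV addV scV by (auto intro: span_add span_scale)
  qed
  then show ?thesis by blast
qed

lemma span_eq_V:
  assumes B: "B \<subseteq> V" and TB: "\<And>b. b \<in> B \<Longrightarrow> X b \<in> span B \<and> Y b \<in> span B \<and> H b \<in> span B"
    and u: "u \<in> B" "u \<noteq> 0"
  shows "span B = V"
proof (rule invariant_nz)
  show "span B \<subseteq> V" using span_minimal[OF B subV] .
  show "subspace (span B)" by simp
  show "u \<in> span B" "u \<noteq> 0" using u span_base by auto
  fix x assume "x \<in> span B"
  then show "X x \<in> span B \<and> Y x \<in> span B \<and> H x \<in> span B"
    using span_T[OF linX B] span_T[OF linY B] span_T[OF linH B] TB by blast
qed

primrec wapp :: "nat list \<Rightarrow> 'v \<Rightarrow> 'v" where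
  "wapp [] v = v"
| "wapp (k # ks) v = (if k = 0 then X else if k = 1 then Y else H) (wapp ks v)"

lemma wapp_V: "v \<in> V \<Longrightarrow> wapp ks v \<in> V"
  by (induction ks) (auto intro: XV YV HV)

lemma countable_span: "\<exists>S. countable S \<and> V \<subseteq> span S"
proof -
  obtain v0 where v0: "v0 \<in> V" "v0 \<noteq> 0" using V_nz by blast
  let ?S = "range (\<lambda>ks. wapp ks v0)"
  have "countable ?S" by simp
  moreover have "span ?S = V"
  proof (rule span_eq_V)
    show "?S \<subseteq> V" using wapp_V v0 by blast
    show "wapp [] v0 \<in> ?S" by blast
    show "wapp [] v0 \<noteq> 0" using v0 by simp
    fix b assume "b \<in> ?S"
    then obtain ks where b: "b = wapp ks v0" by blast
    have "X b = wapp (0 # ks) v0" "Y b = wapp (1 # ks) v0" "H b = wapp (2 # ks) v0" using b by auto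
    then have "X b \<in> ?S \<and> Y b \<in> ?S \<and> H b \<in> ?S" by (metis rangeI)
    then show "X b \<in> span ?S \<and> Y b \<in> span ?S \<and> H b \<in> span ?S" by (auto intro!: span_base)
  qed
  ultimately show ?thesis by blast
qed

lemma central_scalar:
  assumes z: "lin_op_on sc V z"
    and cX: "\<And>v. v \<in> V \<Longrightarrow> z (X v) = X (z v)"
    and cY: "\<And>v. v \<in> V \<Longrightarrow> z (Y v) = Y (z v)"
    and cH: "\<And>v. v \<in> V \<Longrightarrow> z (H v) = H (z v)"
  shows "\<exists>\<mu>. \<forall>v\<in>V. z v = \<mu> *s v"
proof (cases "\<exists>\<mu> u. u \<in> V \<and> u \<noteq> 0 \<and> z u = \<mu> *s u")
  case True
  then obtain \<mu> u where u: "u \<in> V" "u \<noteq> 0" "z u = \<mu> *s u" by blast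
  let ?K = "{v\<in>V. z v = \<mu> *s v}"
  have "?K = V"
  proof (rule invariant_nz)
    show "?K \<subseteq> V" by blast
    show "subspace ?K"
      by (rule subspaceI) (auto simp: zV lin_zero[OF subV z] addV scV lin_add[OF z] lin_scale[OF z]
          scale_right_distrib)
    show "u \<in> ?K" "u \<noteq> 0" using u by auto
    fix x assume x: "x \<in> ?K"
    then show "X x \<in> ?K \<and> Y x \<in> ?K \<and> H x \<in> ?K"
      using cX cY cH XV YV HV lin_scale[OF linX] lin_scale[OF linY] lin_scale[OF linH] by auto
  qed
  then show ?thesis by blast
next
  case False
  then have noeig: "\<And>\<mu> u. u \<in> V \<Longrightarrow> z u = \<mu> *s u \<Longrightarrow> u = 0" by blast
  obtain v0 where v0: "v0 \<in> V" "v0 \<noteq> 0" using V_nz by blast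
  have surj: "\<exists>u\<in>V. z u - \<mu> *s u = v0" for \<mu>
  proof -
    let ?I = "(\<lambda>u. z u - \<mu> *s u) ` V"
    have lz: "lin_op_on sc V (\<lambda>u. z u - \<mu> *s u)" using lin_shift[OF subV z] .
    have "?I = {0} \<or> ?I = V"
    proof (rule invariant)
      show "?I \<subseteq> V" using lin_in[OF lz] by blast
      show "subspace ?I"
      proof (rule subspaceI)
        have "z 0 - \<mu> *s 0 = 0" using lin_zero[OF subV z] by simp
        then show "0 \<in> ?I" using zV by (intro image_eqI[where x=0]) auto
        fix x y assume "x \<in> ?I" "y \<in> ?I"
        then obtain a b where ab: "a \<in> V" "b \<in> V" "x = z a - \<mu> *s a" "y = z b - \<mu> *s b" by blast
        have "x + y = z (a + b) - \<mu> *s (a + b)"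
          unfolding ab(3,4) lin_add[OF z ab(1,2)] scale_right_distrib by (simp add: algebra_simps)
        then show "x + y \<in> ?I" using addV[OF ab(1,2)] by (intro image_eqI[where x="a+b"]) auto
      next
        fix c x assume "x \<in> ?I"
        then obtain a where a: "a \<in> V" "x = z a - \<mu> *s a" by blast
        have "c *s x = z (c *s a) - \<mu> *s (c *s a)"
          using a lin_scale[OF z a(1)] by (simp add: scale_right_diff_distrib)
        then show "c *s x \<in> ?I" using scV[OF a(1)] by (intro image_eqI[where x="c *s a"]) auto
      qed
      fix x assume "x \<in> ?I"
      then obtain a where a: "a \<in> V" "x = z a - \<mu> *s a" by blast
      have za: "z a \<in> V" "\<mu> *s a \<in> V" using a lin_in[OF z] scV by auto
      have "X x = X (z a) - X (\<mu> *s a)" using a(2) lin_diff[OF subV linX za] by simp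
      then have "X x = z (X a) - \<mu> *s X a" using cX[OF a(1)] lin_scale[OF linX a(1)] by simp
      then have 1: "X x \<in> ?I" using XV[OF a(1)] by (intro image_eqI[where x="X a"]) auto
      have "Y x = Y (z a) - Y (\<mu> *s a)" using a(2) lin_diff[OF subV linY za] by simp
      then have "Y x = z (Y a) - \<mu> *s Y a" using cY[OF a(1)] lin_scale[OF linY a(1)] by simp
      then have 2: "Y x \<in> ?I" using YV[OF a(1)] by (intro image_eqI[where x="Y a"]) auto
      have "H x = H (z a) - H (\<mu> *s a)" using a(2) lin_diff[OF subV linH za] by simp
      then have "H x = z (H a) - \<mu> *s H a" using cH[OF a(1)] lin_scale[OF linH a(1)] by simp
      then have 3: "H x \<in> ?I" using HV[OF a(1)] by (intro image_eqI[where x="H a"]) auto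
      show "X x \<in> ?I \<and> Y x \<in> ?I \<and> H x \<in> ?I" using 1 2 3 by blast
    qed
    moreover have "?I \<noteq> {0}"
    proof
      assume "?I = {0}"
      then have "z v0 - \<mu> *s v0 = 0" using v0 by blast
      then have "z v0 = \<mu> *s v0" by simp
      then have "v0 = 0" using noeig[OF v0(1)] by blast
      then show False using v0 by blast
    qed
    ultimately have "v0 \<in> ?I" using v0 by blast
    then show ?thesis by blast
  qed
  define R where "R \<mu> = (SOME u. u \<in> V \<and> z u - \<mu> *s u = v0)" for \<mu>
  have R: "R \<mu> \<in> V" "z (R \<mu>) - \<mu> *s R \<mu> = v0" for \<mu>
    using someI_ex[OF surj[of \<mu>, unfolded Bex_def]] unfolding R_def by auto
  have injR: "inj R"
  proof (rule injI)
    fix a b assume ab: "R a = R b"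
    show "a = b"
    proof (rule ccontr)
      assume "a \<noteq> b"
      have "z (R a) - a *s R a - (z (R a) - b *s R a) = 0" using R(2)[of a] R(2)[of b] ab by simp
      then have "(b - a) *s R a = 0" by (simp add: algebra_simps)
      then have "R a = 0" using \<open>a \<noteq> b\<close> by simp
      then show False using R(2)[of a] v0 lin_zero[OF subV z] by simp
    qed
  qed
  obtain S where S: "countable S" "V \<subseteq> span S" using countable_span by blast
  have "dependent (range R)"
  proof (rule ccontr)
    assume ind: "independent (range R)"
    have "range R \<subseteq> span S" using R(1) S(2) by blast
    then have "countable (range R)" using indep_countable[OF S(1) _ ind] by blast
    then have "countable (UNIV :: complex set)" by (rule countable_image_inj_on) (rule injR)
    then show False using uncountable_UNIV_complex by blast
  qed
  then obtain t u where t: "finite t" "t \<subseteq> range R" "(\<Sum>x\<in>t. u x *s x) = 0" "\<exists>x\<in>t. u x \<noteq> 0"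
    unfolding dependent_explicit by blast
  define L where "L = R -` t"
  have fin: "finite L" unfolding L_def using t(1) injR by (rule finite_vimageI)
  have tR: "t = R ` L" using t(2) unfolding L_def image_vimage_eq by blast
  define c where "c k = u (R k)" for k
  have "(\<Sum>x\<in>R ` L. u x *s x) = (\<Sum>k\<in>L. u (R k) *s R k)"
    by (rule sum.reindex[unfolded comp_def]) (rule inj_on_subset[OF injR], simp)
  then have sum0: "(\<Sum>k\<in>L. c k *s R k) = 0"
    using t(3) unfolding c_def tR by simp
  obtain x0 where x0: "x0 \<in> t" "u x0 \<noteq> 0" using t(4) by blast
  then obtain k0 where "k0 \<in> L" "x0 = R k0" using tR by blast
  then have l0: "k0 \<in> L" "c k0 \<noteq> 0" using x0 unfolding c_def by auto
  define P where "P = (\<Prod>k\<in>L. [:-k,1:])"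
  define Q where "Q \<mu> = (\<Prod>k\<in>L-{\<mu>}. [:-k,1:])" for \<mu>
  have PQ: "P = Q \<mu> * [:-\<mu>,1:]" if "\<mu> \<in> L" for \<mu>
    unfolding P_def Q_def using prod.remove[OF fin that, of "\<lambda>k. [:-k,1:]"] by (simp add: mult.commute)
  have opR: "op_poly sc P z (R \<mu>) = op_poly sc (Q \<mu>) z v0" if "\<mu> \<in> L" for \<mu>
  proof -
    have "op_poly sc P z (R \<mu>) = op_poly sc (Q \<mu>) z (op_poly sc [:-\<mu>,1:] z (R \<mu>))"
      unfolding PQ[OF that] by (rule op_poly_mult[OF subV z R(1)])
    also have "op_poly sc [:-\<mu>,1:] z (R \<mu>) = v0"
      using op_poly_lin1[OF subV z R(1)] R(2)[of \<mu>] by (simp add: algebra_simps)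
    finally show ?thesis .
  qed
  define G where "G = (\<Sum>k\<in>L. smult (c k) (Q k))"
  have "op_poly sc G z v0 = (\<Sum>k\<in>L. c k *s op_poly sc (Q k) z v0)"
    unfolding G_def by (simp add: op_poly_sum op_poly_smult)
  also have "\<dots> = (\<Sum>k\<in>L. c k *s op_poly sc P z (R k))"
    using opR by simp
  also have "\<dots> = op_poly sc P z (\<Sum>k\<in>L. c k *s R k)"
    using op_poly_vsum[OF subV z, of L R P c] R(1) by simp
  also have "\<dots> = 0" unfolding sum0 using op_poly_vzero[OF subV z] .
  finally have G0: "op_poly sc G z v0 = 0" .
  have "poly G k0 = (\<Sum>k\<in>L. c k * poly (Q k) k0)"
    unfolding G_def by (simp add: poly_sum)
  also have "\<dots> = c k0 * poly (Q k0) k0"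
  proof (rule sum.mono_neutral_right[where S="{k0}", simplified])
    show "finite L" by (rule fin)
    show "k0 \<in> L" by (rule l0)
    show "\<forall>i\<in>L - {k0}. c i * poly (Q i) k0 = 0"
      using l0 fin unfolding Q_def by (auto simp: poly_prod)
  qed
  also have "\<dots> \<noteq> 0" using l0 fin unfolding Q_def by (auto simp: poly_prod)
  finally have "G \<noteq> 0" by auto
  then have "v0 = 0" using op_poly_inj[OF subV z, of G v0] noeig v0(1) G0 by blast
  then show ?thesis using v0 by blast
qed


lemma w_facts: "w ^ n = 1" "w \<noteq> 0" "w \<noteq> 1"
proof -
  show wn: "w ^ n = 1" using prim unfolding primitive_root_of_unity_def by blast
  show "w \<noteq> 0"
  proof
    assume "w = 0"
    then have "w ^ n = 0" using n1 by simp
    then show False using wn by simp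
  qed
  have "0 < (1::nat) \<and> 1 < n \<longrightarrow> w ^ 1 \<noteq> 1" using prim unfolding primitive_root_of_unity_def by blast
  then show "w \<noteq> 1" using n1 by simp
qed

lemma w_pow_ne: "0 < k \<Longrightarrow> k < n \<Longrightarrow> w ^ k \<noteq> 1"
  using prim unfolding primitive_root_of_unity_def by blast

lemma XkV: "v \<in> V \<Longrightarrow> (X ^^ k) v \<in> V" using lin_in[OF lin_pow[OF linX]] by blast
lemma YkV: "v \<in> V \<Longrightarrow> (Y ^^ k) v \<in> V" using lin_in[OF lin_pow[OF linY]] by blast
lemma HkV: "v \<in> V \<Longrightarrow> (H ^^ k) v \<in> V" using lin_in[OF lin_pow[OF linH]] by blast
lemma Xk_sc: "v \<in> V \<Longrightarrow> (X ^^ k) (c *s v) = c *s (X ^^ k) v" using lin_scale[OF lin_pow[OF linX]] by blast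
lemma Yk_sc: "v \<in> V \<Longrightarrow> (Y ^^ k) (c *s v) = c *s (Y ^^ k) v" using lin_scale[OF lin_pow[OF linY]] by blast
lemma Hk_sc: "v \<in> V \<Longrightarrow> (H ^^ k) (c *s v) = c *s (H ^^ k) v" using lin_scale[OF lin_pow[OF linH]] by blast
lemma X_sc: "v \<in> V \<Longrightarrow> X (c *s v) = c *s X v" using lin_scale[OF linX] by blast
lemma Y_sc: "v \<in> V \<Longrightarrow> Y (c *s v) = c *s Y v" using lin_scale[OF linY] by blast
lemma H_sc: "v \<in> V \<Longrightarrow> H (c *s v) = c *s H v" using lin_scale[OF linH] by blast
lemma X_add: "u \<in> V \<Longrightarrow> v \<in> V \<Longrightarrow> X (u + v) = X u + X v" using lin_add[OF linX] by blast
lemma Y_add: "u \<in> V \<Longrightarrow> v \<in> V \<Longrightarrow> Y (u + v) = Y u + Y v" using lin_add[OF linY] by blast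
lemma H_add: "u \<in> V \<Longrightarrow> v \<in> V \<Longrightarrow> H (u + v) = H u + H v" using lin_add[OF linH] by blast
lemma X_diff: "u \<in> V \<Longrightarrow> v \<in> V \<Longrightarrow> X (u - v) = X u - X v" using lin_diff[OF subV linX] by blast
lemma Y_diff: "u \<in> V \<Longrightarrow> v \<in> V \<Longrightarrow> Y (u - v) = Y u - Y v" using lin_diff[OF subV linY] by blast
lemma H_diff: "u \<in> V \<Longrightarrow> v \<in> V \<Longrightarrow> H (u - v) = H u - H v" using lin_diff[OF subV linH] by blast
lemma Xk_add: "u \<in> V \<Longrightarrow> v \<in> V \<Longrightarrow> (X ^^ k) (u + v) = (X ^^ k) u + (X ^^ k) v" using lin_add[OF lin_pow[OF linX]] by blast
lemma Yk_add: "u \<in> V \<Longrightarrow> v \<in> V \<Longrightarrow> (Y ^^ k) (u + v) = (Y ^^ k) u + (Y ^^ k) v" using lin_add[OF lin_pow[OF linY]] by blast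

lemma HY: "v \<in> V \<Longrightarrow> H (Y v) = inverse w *s Y (H v)"
  using r2[of v] w_facts(2) by simp

lemma HXk: "v \<in> V \<Longrightarrow> H ((X ^^ k) v) = (X ^^ k) (w ^ k *s H v)"
proof (induction k)
  case 0 then show ?case by simp
next
  case (Suc k)
  have "H ((X ^^ Suc k) v) = X (w *s H ((X ^^ k) v))" using r1 XkV Suc by simp
  also have "\<dots> = X (w *s (X ^^ k) (w ^ k *s H v))" using Suc by simp
  also have "\<dots> = X ((X ^^ k) (w ^ Suc k *s H v))" using Xk_sc HV scV Suc by simp
  finally show ?case by simp
qed

lemma HYk: "v \<in> V \<Longrightarrow> H ((Y ^^ k) v) = (Y ^^ k) (inverse w ^ k *s H v)"
proof (induction k)
  case 0 then show ?case by simp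
next
  case (Suc k)
  have "H ((Y ^^ Suc k) v) = inverse w *s Y (H ((Y ^^ k) v))" using HY YkV Suc by simp
  also have "\<dots> = inverse w *s Y ((Y ^^ k) (inverse w ^ k *s H v))" using Suc by simp
  also have "\<dots> = Y ((Y ^^ k) (inverse w ^ Suc k *s H v))" using Yk_sc Y_sc YkV HV scV Suc by simp
  finally show ?case by simp
qed

lemma eigX: "v \<in> V \<Longrightarrow> H v = l *s v \<Longrightarrow> H ((X ^^ k) v) = (w ^ k * l) *s (X ^^ k) v"
  using HXk Xk_sc by simp

lemma eigY: "v \<in> V \<Longrightarrow> H v = l *s v \<Longrightarrow> H ((Y ^^ k) v) = (inverse w ^ k * l) *s (Y ^^ k) v"
  using HYk Yk_sc by simp

lemma HkX: "v \<in> V \<Longrightarrow> (H ^^ k) (X v) = X (w ^ k *s (H ^^ k) v)"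
proof (induction k)
  case 0 then show ?case by simp
next
  case (Suc k)
  have "(H ^^ Suc k) (X v) = H (X (w ^ k *s (H ^^ k) v))" using Suc by simp
  also have "\<dots> = X (w *s H (w ^ k *s (H ^^ k) v))" using r1 HkV scV Suc by simp
  also have "\<dots> = X (w ^ Suc k *s (H ^^ Suc k) v)" using H_sc HkV Suc by simp
  finally show ?case .
qed

lemma YHk: "v \<in> V \<Longrightarrow> Y ((H ^^ k) v) = w ^ k *s (H ^^ k) (Y v)"
proof (induction k)
  case 0 then show ?case by simp
next
  case (Suc k)
  have "Y ((H ^^ Suc k) v) = w *s H (Y ((H ^^ k) v))" using r2 HkV Suc by simp
  also have "\<dots> = w *s H (w ^ k *s (H ^^ k) (Y v))" using Suc by simp
  also have "\<dots> = w ^ Suc k *s (H ^^ Suc k) (Y v)" using H_sc HkV YV Suc by simp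
  finally show ?case .
qed

lemma Hn_scalar: "\<exists>\<beta>. \<forall>v\<in>V. (H ^^ n) v = \<beta> *s v"
proof (rule central_scalar)
  show "lin_op_on sc V (H ^^ n)" by (rule lin_pow[OF linH])
  fix v assume v: "v \<in> V"
  show "(H ^^ n) (X v) = X ((H ^^ n) v)" using HkX[OF v, of n] w_facts by simp
  show "(H ^^ n) (Y v) = Y ((H ^^ n) v)" using YHk[OF v, of n] w_facts by simp
  show "(H ^^ n) (H v) = H ((H ^^ n) v)" by (rule funpow_swap1[symmetric])
qed

lemma eigvec: "\<exists>v l. v \<in> V \<and> v \<noteq> 0 \<and> H v = l *s v"
proof (rule ccontr)
  assume "\<not> ?thesis"
  then have noeig: "\<And>l u. u \<in> V \<Longrightarrow> H u = l *s u \<Longrightarrow> u = 0" by blast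
  obtain \<beta> where b: "\<forall>v\<in>V. (H ^^ n) v = \<beta> *s v" using Hn_scalar by blast
  obtain v0 where v0: "v0 \<in> V" "v0 \<noteq> 0" using V_nz by blast
  let ?p = "monom 1 n - [:\<beta>:]"
  have "coeff [:\<beta>:] n = 0" using n1 by (cases n) auto
  then have "coeff ?p n = 1" by (simp add: coeff_diff)
  then have p0: "?p \<noteq> 0" by (metis coeff_0 zero_neq_one)
  have "op_poly sc ?p H v0 = (H ^^ n) v0 - \<beta> *s v0"
    using op_poly_add[of "monom 1 n" "- [:\<beta>:]" H v0] op_poly_monom[OF subV linH v0(1)]
      op_poly_const[of "-\<beta>"] by (simp add: diff_conv_add_uminus del: add_uminus_conv_diff)
  then have "op_poly sc ?p H v0 = 0" using b v0 by simp
  then have "v0 = 0" using op_poly_inj[OF subV linH, of ?p v0] noeig p0 v0 by blast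
  then show False using v0 by blast
qed

definition Cop :: "'v \<Rightarrow> 'v" where "Cop v = X (Y v) - H v"

lemma C_lin: "lin_op_on sc V Cop"
  unfolding lin_op_on_def
proof (intro conjI ballI allI)
  fix v assume v: "v \<in> V"
  show "Cop v \<in> V" unfolding Cop_def using v by (intro diffV XV YV HV)
  fix c show "Cop (c *s v) = c *s Cop v" unfolding Cop_def
    using v by (simp add: X_sc Y_sc H_sc YV scale_right_diff_distrib)
next
  fix u v assume uv: "u \<in> V" "v \<in> V"
  have "Cop (u + v) = X (Y u) + X (Y v) - (H u + H v)" unfolding Cop_def
    using uv by (simp add: X_add Y_add H_add YV)
  then show "Cop (u + v) = Cop u + Cop v" unfolding Cop_def by (simp add: algebra_simps)
qed

lemma C_scalar: "\<exists>\<gamma>. \<forall>v\<in>V. Cop v = \<gamma> *s v"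
proof (rule central_scalar[OF C_lin])
  fix v assume v: "v \<in> V"
  have "Cop (X v) = X (Y (X v)) - H (X v)" by (simp add: Cop_def)
  also have "Y (X v) = X (Y v) + (w - 1) *s H v" using r3[OF v] by (simp add: algebra_simps)
  also have "X (X (Y v) + (w - 1) *s H v) = X (X (Y v)) + (w - 1) *s X (H v)"
    using X_add X_sc XV YV HV scV v by simp
  also have "H (X v) = X (w *s H v)" using r1 v by simp
  also have "X (w *s H v) = w *s X (H v)" using X_sc HV v by simp
  finally have "Cop (X v) = X (X (Y v)) - X (H v)" by (simp add: algebra_simps)
  also have "\<dots> = X (Cop v)" unfolding Cop_def using X_diff XV YV HV v by simp
  finally show "Cop (X v) = X (Cop v)" .
  have "Y (Cop v) = Y (X (Y v)) - Y (H v)" unfolding Cop_def using Y_diff XV YV HV v by simp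
  also have "Y (X (Y v)) = X (Y (Y v)) + (w - 1) *s H (Y v)" using r3[OF YV[OF v]] by (simp add: algebra_simps)
  also have "Y (H v) = w *s H (Y v)" using r2 v by simp
  finally have "Y (Cop v) = X (Y (Y v)) - H (Y v)" by (simp add: algebra_simps)
  then show "Cop (Y v) = Y (Cop v)" by (simp add: Cop_def)
  have "H (Cop v) = H (X (Y v)) - H (H v)" unfolding Cop_def using H_diff XV YV HV v by simp
  also have "H (X (Y v)) = X (w *s H (Y v))" using r1 YV v by simp
  also have "w *s H (Y v) = Y (H v)" using r2 v by simp
  finally show "Cop (H v) = H (Cop v)" by (simp add: Cop_def)
qed

lemma YX1: "u \<in> V \<Longrightarrow> Y (X u) = X (Y u) + (w - 1) *s H u"
  using r3 by (simp add: algebra_simps)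

lemma XY1: "u \<in> V \<Longrightarrow> X (Y u) = Y (X u) - (w - 1) *s H u"
  using r3 by (simp add: algebra_simps)

lemma YXk: "u \<in> V \<Longrightarrow> Y ((X ^^ Suc k) u) = (X ^^ Suc k) (Y u) + (w ^ Suc k - 1) *s (X ^^ k) (H u)"
proof (induction k)
  case 0 then show ?case using YX1 by simp
next
  case (Suc k)
  have u1: "(X ^^ Suc k) u \<in> V" using XkV Suc by blast
  have "Y ((X ^^ Suc (Suc k)) u) = X (Y ((X ^^ Suc k) u)) + (w - 1) *s H ((X ^^ Suc k) u)"
    using YX1[OF u1] by simp
  also have "Y ((X ^^ Suc k) u) = (X ^^ Suc k) (Y u) + (w ^ Suc k - 1) *s (X ^^ k) (H u)"
    using Suc by simp
  also have "H ((X ^^ Suc k) u) = (w ^ Suc k) *s (X ^^ Suc k) (H u)"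
    using HXk[OF Suc.prems, of "Suc k"] Xk_sc[OF HV[OF Suc.prems], of "Suc k"] by (simp del: funpow.simps)
  also have "X ((X ^^ Suc k) (Y u) + (w ^ Suc k - 1) *s (X ^^ k) (H u))
      = (X ^^ Suc (Suc k)) (Y u) + (w ^ Suc k - 1) *s (X ^^ Suc k) (H u)"
  proof -
    have aV: "(X ^^ Suc k) (Y u) \<in> V" "(X ^^ k) (H u) \<in> V" using XkV YV HV Suc.prems by blast+
    show ?thesis using X_add[OF aV(1) scV[OF aV(2)]] X_sc[OF aV(2)] by simp
  qed
  finally have e: "Y ((X ^^ Suc (Suc k)) u) = (X ^^ Suc (Suc k)) (Y u) + (w ^ Suc k - 1) *s (X ^^ Suc k) (H u)
      + (w - 1) *s (w ^ Suc k *s (X ^^ Suc k) (H u))" .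
  have c: "(w ^ Suc k - 1) + (w - 1) * w ^ Suc k = w ^ Suc (Suc k) - 1" by (simp add: algebra_simps)
  show ?case unfolding e add.assoc comb1 c by (rule refl)
qed

lemma XYk: "u \<in> V \<Longrightarrow> X ((Y ^^ Suc k) u) = (Y ^^ Suc k) (X u) + (w * inverse w ^ Suc k - w) *s (Y ^^ k) (H u)"
proof (induction k)
  case 0 then show ?case using XY1 w_facts by (simp add: algebra_simps)
next
  case (Suc k)
  have u1: "(Y ^^ Suc k) u \<in> V" using YkV Suc by blast
  have "X ((Y ^^ Suc (Suc k)) u) = Y (X ((Y ^^ Suc k) u)) - (w - 1) *s H ((Y ^^ Suc k) u)"
    using XY1[OF u1] by simp
  also have "X ((Y ^^ Suc k) u) = (Y ^^ Suc k) (X u) + (w * inverse w ^ Suc k - w) *s (Y ^^ k) (H u)"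
    using Suc by simp
  also have "H ((Y ^^ Suc k) u) = (inverse w ^ Suc k) *s (Y ^^ Suc k) (H u)"
    using HYk[OF Suc.prems, of "Suc k"] Yk_sc[OF HV[OF Suc.prems], of "Suc k"] by (simp del: funpow.simps)
  also have "Y ((Y ^^ Suc k) (X u) + (w * inverse w ^ Suc k - w) *s (Y ^^ k) (H u))
      = (Y ^^ Suc (Suc k)) (X u) + (w * inverse w ^ Suc k - w) *s (Y ^^ Suc k) (H u)"
  proof -
    have aV: "(Y ^^ Suc k) (X u) \<in> V" "(Y ^^ k) (H u) \<in> V" using YkV XV HV Suc.prems by blast+
    show ?thesis using Y_add[OF aV(1) scV[OF aV(2)]] Y_sc[OF aV(2)] by simp
  qed
  finally have e: "X ((Y ^^ Suc (Suc k)) u) = (Y ^^ Suc (Suc k)) (X u) + (w * inverse w ^ Suc k - w) *s (Y ^^ Suc k) (H u)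
     - (w - 1) *s (inverse w ^ Suc k *s (Y ^^ Suc k) (H u))" .
  have c: "(w * inverse w ^ Suc k - w) - (w - 1) * inverse w ^ Suc k = w * inverse w ^ Suc (Suc k) - w"
    using w_facts(2) by (simp add: field_simps)
  show ?case unfolding e comb2 c by (rule refl)
qed

lemma Xn_scalar: "\<exists>\<alpha>. \<forall>v\<in>V. (X ^^ n) v = \<alpha> *s v"
proof (rule central_scalar)
  show "lin_op_on sc V (X ^^ n)" by (rule lin_pow[OF linX])
  fix v assume v: "v \<in> V"
  show "(X ^^ n) (X v) = X ((X ^^ n) v)" by (rule funpow_swap1[symmetric])
  obtain m where m: "n = Suc m" using n1 by (cases n) auto
  show "(X ^^ n) (Y v) = Y ((X ^^ n) v)" using YXk[OF v, of m] w_facts(1) m by simp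
  show "(X ^^ n) (H v) = H ((X ^^ n) v)" using HXk[OF v, of n] w_facts(1) by simp
qed

lemma Yn_scalar: "\<exists>\<alpha>. \<forall>v\<in>V. (Y ^^ n) v = \<alpha> *s v"
proof (rule central_scalar)
  show "lin_op_on sc V (Y ^^ n)" by (rule lin_pow[OF linY])
  fix v assume v: "v \<in> V"
  show "(Y ^^ n) (Y v) = Y ((Y ^^ n) v)" by (rule funpow_swap1[symmetric])
  obtain m where m: "n = Suc m" using n1 by (cases n) auto
  have "inverse w ^ n = 1" using w_facts(1) by (simp add: power_inverse)
  then show "(Y ^^ n) (X v) = X ((Y ^^ n) v)" using XYk[OF v, of m] m by simp
  show "(Y ^^ n) (H v) = H ((Y ^^ n) v)" using HYk[OF v, of n] \<open>inverse w ^ n = 1\<close> by simp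
qed

lemma XY_C: "\<forall>v\<in>V. Cop v = \<gamma> *s v \<Longrightarrow> u \<in> V \<Longrightarrow> X (Y u) = \<gamma> *s u + H u"
proof -
  assume "\<forall>v\<in>V. Cop v = \<gamma> *s v" "u \<in> V"
  then have "X (Y u) - H u = \<gamma> *s u" unfolding Cop_def by blast
  then show ?thesis by (simp add: algebra_simps)
qed

lemma YX_C: "\<forall>v\<in>V. Cop v = \<gamma> *s v \<Longrightarrow> u \<in> V \<Longrightarrow> Y (X u) = \<gamma> *s u + w *s H u"
proof -
  assume C: "\<forall>v\<in>V. Cop v = \<gamma> *s v" and u: "u \<in> V"
  have "Y (X u) = \<gamma> *s u + H u + (w - 1) *s H u" using YX1[OF u] XY_C[OF C u] by simp
  then show ?thesis by (simp add: algebra_simps)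
qed

lemma fin: "fin_dim sc V"
proof -
  obtain v l where v: "v \<in> V" "v \<noteq> 0" "H v = l *s v" using eigvec by blast
  obtain \<alpha> where a: "\<forall>v\<in>V. (X ^^ n) v = \<alpha> *s v" using Xn_scalar by blast
  obtain \<alpha>' where a': "\<forall>v\<in>V. (Y ^^ n) v = \<alpha>' *s v" using Yn_scalar by blast
  obtain \<gamma> where C: "\<forall>v\<in>V. Cop v = \<gamma> *s v" using C_scalar by blast
  let ?B = "(\<lambda>i. (X ^^ i) v) ` {..<n} \<union> (\<lambda>i. (Y ^^ i) v) ` {..<n}"
  have BV: "?B \<subseteq> V" using XkV YkV v by blast
  have XB0: "(X ^^ i) v \<in> ?B" if "i < n" for i using that by (intro UnI1 imageI) simp
  have YB0: "(Y ^^ i) v \<in> ?B" if "i < n" for i using that by (intro UnI2 imageI) simp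
  have vB: "v \<in> ?B" using XB0[of 0] n1 by simp
  have XB: "(X ^^ i) v \<in> span ?B" if "i < n" for i using XB0[OF that] by (rule span_base)
  have YB: "(Y ^^ i) v \<in> span ?B" if "i < n" for i using YB0[OF that] by (rule span_base)
  have "span ?B = V"
  proof (rule span_eq_V[OF BV _ vB v(2)])
    fix b assume "b \<in> ?B"
    then consider (x) i where "i < n" "b = (X ^^ i) v" | (y) i where "i < n" "b = (Y ^^ i) v" by blast
    then show "X b \<in> span ?B \<and> Y b \<in> span ?B \<and> H b \<in> span ?B"
    proof cases
      case x
      have "H b = (w ^ i * l) *s b" using eigX[OF v(1,3)] x by simp
      then have h: "H b \<in> span ?B" using XB[OF x(1)] x by (simp add: span_scale)
      have xx: "X b \<in> span ?B"
      proof (cases "Suc i < n")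
        case True then show ?thesis using XB[of "Suc i"] x by simp
      next
        case False then have "Suc i = n" using x by simp
        have "X b = (X ^^ Suc i) v" using x by simp
        then have "X b = \<alpha> *s v" using a v \<open>Suc i = n\<close> by simp
        then show ?thesis using vB by (simp add: span_scale span_base)
      qed
      have yy: "Y b \<in> span ?B"
      proof (cases i)
        case 0 then show ?thesis using YB[of 1] x n1 by simp
      next
        case (Suc j)
        have j: "(X ^^ j) v \<in> V" using XkV v by blast
        have "Y b = Y (X ((X ^^ j) v))" using x Suc by simp
        also have "\<dots> = \<gamma> *s (X ^^ j) v + w *s H ((X ^^ j) v)" using YX_C[OF C j] .
        also have "\<dots> = (\<gamma> + w * (w ^ j * l)) *s (X ^^ j) v"
          using eigX[OF v(1,3)] by (simp add: scale_left_distrib)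
        finally show ?thesis using XB[of j] x Suc by (simp add: span_scale)
      qed
      show ?thesis using h xx yy by blast
    next
      case y
      have "H b = (inverse w ^ i * l) *s b" using eigY[OF v(1,3)] y by simp
      then have h: "H b \<in> span ?B" using YB[OF y(1)] y by (simp add: span_scale)
      have yy: "Y b \<in> span ?B"
      proof (cases "Suc i < n")
        case True then show ?thesis using YB[of "Suc i"] y by simp
      next
        case False then have "Suc i = n" using y by simp
        have "Y b = (Y ^^ Suc i) v" using y by simp
        then have "Y b = \<alpha>' *s v" using a' v \<open>Suc i = n\<close> by simp
        then show ?thesis using vB by (simp add: span_scale span_base)
      qed
      have xx: "X b \<in> span ?B"
      proof (cases i)
        case 0 then show ?thesis using XB[of 1] y n1 by simp
      next
        case (Suc j)
        have j: "(Y ^^ j) v \<in> V" using YkV v by blast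
        have "X b = X (Y ((Y ^^ j) v))" using y Suc by simp
        also have "\<dots> = \<gamma> *s (Y ^^ j) v + H ((Y ^^ j) v)" using XY_C[OF C j] .
        also have "\<dots> = (\<gamma> + inverse w ^ j * l) *s (Y ^^ j) v"
          using eigY[OF v(1,3)] by (simp add: scale_left_distrib)
        finally show ?thesis using YB[of j] y Suc by (simp add: span_scale)
      qed
      show ?thesis using h xx yy by blast
    qed
  qed
  moreover have "finite ?B" by simp
  ultimately show ?thesis unfolding fin_dim_def using BV by blast
qed
end


context hm
begin

lemma sum_single: "finite A \<Longrightarrow> k \<in> A \<Longrightarrow> \<forall>i\<in>A - {k}. f i = 0 \<Longrightarrow> sum f A = f k"
  by (simp add: sum.remove)

lemma indep_eig:
  fixes m :: nat
  assumes eV: "\<And>i. i < m \<Longrightarrow> e i \<in> V" and enz: "\<And>i. i < m \<Longrightarrow> e i \<noteq> 0"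
    and eig: "\<And>i. i < m \<Longrightarrow> H (e i) = \<mu> i *s e i"
    and dist: "\<And>i j. i < m \<Longrightarrow> j < m \<Longrightarrow> \<mu> i = \<mu> j \<Longrightarrow> i = j"
    and s0: "(\<Sum>i<m. c i *s e i) = 0"
  shows "\<forall>k<m. c k = 0"
proof (intro allI impI)
  fix k assume k: "k < m"
  define Q where "Q = (\<Prod>j\<in>{..<m}-{k}. [:-\<mu> j,1:])"
  have "op_poly sc Q H (\<Sum>i<m. c i *s e i) = (\<Sum>i<m. c i *s op_poly sc Q H (e i))"
    using op_poly_vsum[OF subV linH, of "{..<m}" e Q c] eV by simp
  also have "\<dots> = (\<Sum>i<m. (c i * poly Q (\<mu> i)) *s e i)"
    using op_poly_eigen[OF subV linH eV eig] by simp
  also have "\<dots> = (c k * poly Q (\<mu> k)) *s e k"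
  proof (rule sum_single)
    show "k \<in> {..<m}" using k by simp
    show "\<forall>i\<in>{..<m} - {k}. (c i * poly Q (\<mu> i)) *s e i = 0"
    proof
      fix i assume i: "i \<in> {..<m} - {k}"
      have "poly Q (\<mu> i) = (\<Prod>j\<in>{..<m} - {k}. poly [:-\<mu> j,1:] (\<mu> i))"
        unfolding Q_def by (rule poly_prod)
      also have "\<dots> = 0" using i by (intro prod_zero_iff[THEN iffD2] bexI[of _ i]) auto
      finally show "(c i * poly Q (\<mu> i)) *s e i = 0" by simp
    qed
  qed simp
  finally have "(c k * poly Q (\<mu> k)) *s e k = 0" using s0 op_poly_vzero[OF subV linH] by simp
  moreover have "poly Q (\<mu> k) \<noteq> 0" unfolding Q_def using dist k by (auto simp: poly_prod)
  ultimately show "c k = 0" using enz[OF k] by simp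
qed

definition phi :: "nat \<Rightarrow> (nat \<Rightarrow> 'v) \<Rightarrow> complex poly \<Rightarrow> 'v" where
  "phi m e p = (\<Sum>j<m. coeff p j *s e j)"

lemma phi_add: "phi m e (p + q) = phi m e p + phi m e q"
  unfolding phi_def by (simp add: scale_left_distrib sum.distrib)

lemma phi_smult: "phi m e (smult c p) = c *s phi m e p"
  unfolding phi_def by (simp add: scale_sum_right)

lemma phi_diff: "phi m e (p - q) = phi m e p - phi m e q"
  unfolding phi_def by (simp add: scale_left_diff_distrib sum_subtractf)

lemma phi_0: "phi m e 0 = 0"
  unfolding phi_def by simp

lemma phi_monom: "k < m \<Longrightarrow> phi m e (smult s (monom 1 k)) = s *s e k"
proof -
  assume k: "k < m"
  have "phi m e (smult s (monom 1 k)) = (\<Sum>j<m. if j = k then s *s e k else 0)"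
    unfolding phi_def by (rule sum.cong) (auto simp: coeff_monom)
  also have "\<dots> = s *s e k" using k by simp
  finally show ?thesis .
qed

lemma phi_monom1: "k < m \<Longrightarrow> phi m e (monom 1 k) = e k"
  using phi_monom[of k m e 1] by simp

lemma phi_lin_ext: "phi m e (lin_ext m g p) = (\<Sum>i<m. coeff p i *s phi m e (g i))"
proof -
  have "phi m e (lin_ext m g p) = (\<Sum>j<m. \<Sum>i<m. (coeff p i * coeff (g i) j) *s e j)"
    unfolding phi_def lin_ext_def by (simp add: coeff_sum scale_sum_left)
  also have "\<dots> = (\<Sum>i<m. \<Sum>j<m. (coeff p i * coeff (g i) j) *s e j)" by (rule sum.swap)
  also have "\<dots> = (\<Sum>i<m. coeff p i *s phi m e (g i))" unfolding phi_def by (simp add: scale_sum_right)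
  finally show ?thesis .
qed

lemma phi_V: "(\<And>i. i < m \<Longrightarrow> e i \<in> V) \<Longrightarrow> phi m e p \<in> V"
  unfolding phi_def by (auto intro!: subspace_sum[OF subV] scV)

lemma lin_phi:
  assumes T: "lin_op_on sc V T" and eV: "\<And>i. i < m \<Longrightarrow> e i \<in> V"
  shows "T (phi m e p) = (\<Sum>i<m. coeff p i *s T (e i))"
proof -
  have "T (phi m e p) = (\<Sum>i<m. T (coeff p i *s e i))"
    unfolding phi_def by (rule lin_sum[OF subV T]) (simp add: eV scV)
  also have "\<dots> = (\<Sum>i<m. coeff p i *s T (e i))"
    by (rule sum.cong) (auto simp: lin_scale[OF T] eV)
  finally show ?thesis .
qed

lemma lin_ext_deg: "0 < m \<Longrightarrow> (\<And>i. i < m \<Longrightarrow> degree (g i) < m) \<Longrightarrow> degree (lin_ext m g p) < m"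
proof -
  assume m: "0 < m" and g: "\<And>i. i < m \<Longrightarrow> degree (g i) < m"
  have "degree (lin_ext m g p) \<le> m - 1"
  proof (rule degree_le)
    show "\<forall>i>m - 1. coeff (lin_ext m g p) i = 0"
    proof (intro allI impI)
      fix i assume i: "m - 1 < i"
      have "coeff (g x) i = 0" if "x \<in> {..<m}" for x
        using g[of x] that i by (intro coeff_eq_0) auto
      then show "coeff (lin_ext m g p) i = 0" by (simp add: lin_ext_def coeff_sum)
    qed
  qed
  then show ?thesis using m by simp
qed

lemma iso_basis:
  assumes m: "0 < m"
    and eV: "\<And>i. i < m \<Longrightarrow> e i \<in> V" and e0: "e 0 \<noteq> 0"
    and indep: "\<And>c. (\<Sum>i<m. c i *s e i) = 0 \<Longrightarrow> \<forall>i<m. c i = 0"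
    and dX: "\<And>i. i < m \<Longrightarrow> degree (gX i) < m"
    and dY: "\<And>i. i < m \<Longrightarrow> degree (gY i) < m"
    and dH: "\<And>i. i < m \<Longrightarrow> degree (gH i) < m"
    and pX: "\<And>i. i < m \<Longrightarrow> phi m e (gX i) = X (e i)"
    and pY: "\<And>i. i < m \<Longrightarrow> phi m e (gY i) = Y (e i)"
    and pH: "\<And>i. i < m \<Longrightarrow> phi m e (gH i) = H (e i)"
  shows "H_iso smult (polys_below m) (lin_ext m gX) (lin_ext m gY) (lin_ext m gH) sc V X Y H"
proof -
  let ?f = "phi m e"
  have iX: "?f (lin_ext m gX p) = X (?f p)" for p
  proof -
    have "?f (lin_ext m gX p) = (\<Sum>i<m. coeff p i *s ?f (gX i))" by (rule phi_lin_ext)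
    also have "\<dots> = (\<Sum>i<m. coeff p i *s X (e i))" by (rule sum.cong) (simp_all add: pX)
    also have "\<dots> = X (?f p)" by (rule lin_phi[OF linX eV, symmetric])
    finally show ?thesis .
  qed
  have iY: "?f (lin_ext m gY p) = Y (?f p)" for p
  proof -
    have "?f (lin_ext m gY p) = (\<Sum>i<m. coeff p i *s ?f (gY i))" by (rule phi_lin_ext)
    also have "\<dots> = (\<Sum>i<m. coeff p i *s Y (e i))" by (rule sum.cong) (simp_all add: pY)
    also have "\<dots> = Y (?f p)" by (rule lin_phi[OF linY eV, symmetric])
    finally show ?thesis .
  qed
  have iH: "?f (lin_ext m gH p) = H (?f p)" for p
  proof -
    have "?f (lin_ext m gH p) = (\<Sum>i<m. coeff p i *s ?f (gH i))" by (rule phi_lin_ext)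
    also have "\<dots> = (\<Sum>i<m. coeff p i *s H (e i))" by (rule sum.cong) (simp_all add: pH)
    also have "\<dots> = H (?f p)" by (rule lin_phi[OF linH eV, symmetric])
    finally show ?thesis .
  qed
  have inj: "inj_on ?f (polys_below m)"
  proof (rule inj_onI)
    fix p q assume pq: "p \<in> polys_below m" "q \<in> polys_below m" "?f p = ?f q"
    let ?r = "p - q"
    have "?f ?r = 0" using pq(3) phi_diff by simp
    then have c: "\<forall>i<m. coeff ?r i = 0" using indep[of "coeff ?r"] unfolding phi_def by simp
    have "degree ?r \<le> m - 1" using pq(1,2) by (intro degree_diff_le) (auto simp: polys_below_def)
    then have "degree ?r < m" using m by simp
    have "\<forall>i\<ge>m. coeff ?r i = 0"
    proof (intro allI impI)
      fix i assume "m \<le> i"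
      then show "coeff ?r i = 0" using \<open>degree ?r < m\<close> by (intro coeff_eq_0) linarith
    qed
    have "?r = 0"
    proof (rule poly_eqI)
      fix i show "coeff ?r i = coeff 0 i"
        using c \<open>\<forall>i\<ge>m. coeff ?r i = 0\<close> by (cases "i < m") auto
    qed
    then show "p = q" by simp
  qed
  have img: "?f ` polys_below m = V"
  proof (rule invariant_nz)
    show "?f ` polys_below m \<subseteq> V" using phi_V[of m e] eV by blast
    show "subspace (?f ` polys_below m)"
    proof (rule subspaceI)
      show "0 \<in> ?f ` polys_below m" using phi_0 m unfolding polys_below_def
        by (intro image_eqI[where x=0]) auto
      fix x y assume "x \<in> ?f ` polys_below m" "y \<in> ?f ` polys_below m"
      then obtain p q where "p \<in> polys_below m" "q \<in> polys_below m" "x = ?f p" "y = ?f q" by blast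
      moreover have "degree (p + q) \<le> m - 1" using calculation(1,2)
        by (intro degree_add_le) (auto simp: polys_below_def)
      ultimately show "x + y \<in> ?f ` polys_below m" unfolding polys_below_def using m
        by (intro image_eqI[where x="p+q"]) (auto simp: phi_add)
    next
      fix c x assume "x \<in> ?f ` polys_below m"
      then obtain p where "p \<in> polys_below m" "x = ?f p" by blast
      then show "c *s x \<in> ?f ` polys_below m" unfolding polys_below_def
        by (intro image_eqI[where x="smult c p"]) (auto simp: phi_smult)
    qed
    show "e 0 \<in> ?f ` polys_below m" using phi_monom1[OF m, of e] m unfolding polys_below_def
      by (intro image_eqI[where x="monom 1 0"]) auto
    show "e 0 \<noteq> 0" by (rule e0)
    fix x assume "x \<in> ?f ` polys_below m"
    then obtain p where p: "x = ?f p" by blast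
    have "X x = ?f (lin_ext m gX p)" "Y x = ?f (lin_ext m gY p)" "H x = ?f (lin_ext m gH p)"
      unfolding p iX iY iH by (rule refl)+
    moreover have "lin_ext m gX p \<in> polys_below m" "lin_ext m gY p \<in> polys_below m"
      "lin_ext m gH p \<in> polys_below m"
      unfolding polys_below_def using lin_ext_deg[where g=gX, OF m dX] lin_ext_deg[where g=gY, OF m dY]
        lin_ext_deg[where g=gH, OF m dH]
      by blast+
    ultimately show "X x \<in> ?f ` polys_below m \<and> Y x \<in> ?f ` polys_below m \<and> H x \<in> ?f ` polys_below m"
      by blast
  qed
  have bij: "bij_betw ?f (polys_below m) V" using inj img by (simp add: bij_betw_def)
  show ?thesis unfolding H_iso_def
    apply (rule exI[of _ ?f])
    apply (intro conjI)
       apply (rule bij)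
      apply (intro ballI, rule phi_add)
     apply (intro ballI allI, rule phi_smult)
    apply (intro ballI conjI)
      apply (rule iX)
     apply (rule iY)
    apply (rule iH)
    done
qed

end


lemma deg_sm: "k < n \<Longrightarrow> degree (smult c (monom (1::complex) k)) < n"
  by (meson degree_monom_le degree_smult_le le_less_trans order_trans)

lemma deg_qpow: "0 < n \<Longrightarrow> degree (qpow n a k) < n"
proof -
  assume n: "0 < n"
  have "nat (k mod int n) < n" using n by (simp add: nat_less_iff)
  then show ?thesis unfolding qpow_def by (rule deg_sm)
qed

lemma deg_sqpow: "0 < n \<Longrightarrow> degree (smult c (qpow n a k)) < n"
  using deg_qpow degree_smult_le le_less_trans by blast

context hm
begin

lemma w_inj: "i < n \<Longrightarrow> j < n \<Longrightarrow> w ^ i = w ^ j \<Longrightarrow> i = j"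
proof (rule ccontr)
  assume ij: "i < n" "j < n" "w ^ i = w ^ j" "i \<noteq> j"
  have key: "a < b \<Longrightarrow> b < n \<Longrightarrow> w ^ a = w ^ b \<Longrightarrow> False" for a b
  proof -
    assume ab: "a < b" "b < n" "w ^ a = w ^ b"
    have "a + (b - a) = b" using ab by simp
    then have "w ^ b = w ^ a * w ^ (b - a)" by (metis power_add)
    then have "w ^ (b - a) = 1" using ab(3) w_facts(2) by simp
    then show False using w_pow_ne[of "b - a"] ab by simp
  qed
  show False
  proof (cases "i < j")
    case True then show False using key[of i j] ij by simp
  next
    case False then have "j < i" using ij by simp
    then show False using key[of j i] ij by simp
  qed
qed

lemma powT_zero: "lin_op_on sc V T \<Longrightarrow> (T ^^ k) 0 = 0"
  using lin_zero[OF subV lin_pow] by blast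

lemma pow_split: "i \<le> k \<Longrightarrow> (T ^^ k) v = (T ^^ (k - i)) ((T ^^ i) v)"
proof -
  assume "i \<le> k"
  then have "k = (k - i) + i" by simp
  then have "(T ^^ k) v = (T ^^ ((k - i) + i)) v" by simp
  also have "\<dots> = (T ^^ (k - i)) ((T ^^ i) v)" by (simp add: funpow_add)
  finally show ?thesis .
qed

lemma case_a:
  assumes v: "v \<in> V" "v \<noteq> 0" "H v = 0"
  shows "\<exists>a b. H_iso smult (polys_below 1) (modA_X a) (modA_Y b) modA_H sc V X Y H"
proof -
  let ?K = "{u\<in>V. H u = 0}"
  have "?K = V"
  proof (rule invariant_nz)
    show "?K \<subseteq> V" by blast
    show "subspace ?K"
    proof (rule subspaceI)
      show "0 \<in> ?K" using zV lin_zero[OF subV linH] by simp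
      fix x y assume "x \<in> ?K" "y \<in> ?K" then show "x + y \<in> ?K" using H_add addV by simp
    next
      fix c x assume "x \<in> ?K" then show "c *s x \<in> ?K" using H_sc scV by simp
    qed
    show "v \<in> ?K" "v \<noteq> 0" using v by auto
    fix x assume x: "x \<in> ?K"
    have "H (X x) = 0" using r1 x lin_zero[OF subV linX] by simp
    moreover have "H (Y x) = 0" using HY x lin_zero[OF subV linY] by simp
    ultimately show "X x \<in> ?K \<and> Y x \<in> ?K \<and> H x \<in> ?K" using x XV YV zV lin_zero[OF subV linH] by auto
  qed
  then have Hz: "\<And>u. u \<in> V \<Longrightarrow> H u = 0" by blast
  have XYc: "X (Y u) = Y (X u)" if "u \<in> V" for u using XY1[OF that] Hz[OF that] by simp
  obtain a where a: "\<forall>u\<in>V. X u = a *s u"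
  proof -
    have "\<exists>a. \<forall>u\<in>V. X u = a *s u"
      by (rule central_scalar[OF linX]) (auto simp: XYc Hz XV YV HV lin_zero[OF subV linX])
    then show ?thesis using that by blast
  qed
  obtain b where b: "\<forall>u\<in>V. Y u = b *s u"
  proof -
    have "\<exists>b. \<forall>u\<in>V. Y u = b *s u"
      by (rule central_scalar[OF linY]) (auto simp: XYc Hz XV YV HV lin_zero[OF subV linY])
    then show ?thesis using that by blast
  qed
  let ?e = "\<lambda>i::nat. v"
  have "H_iso smult (polys_below 1) (lin_ext 1 (\<lambda>j. smult a (monom 1 0))) (lin_ext 1 (\<lambda>j. smult b (monom 1 0)))
       (lin_ext 1 (\<lambda>j. 0)) sc V X Y H"
  proof (rule iso_basis)
    show "(0::nat) < 1" by simp
    show "\<And>i. i < 1 \<Longrightarrow> ?e i \<in> V" using v by simp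
    show "?e 0 \<noteq> 0" using v by simp
    show "\<forall>i<1. c i = 0" if "(\<Sum>i<1. c i *s ?e i) = 0" for c using that v by simp
    show "degree (smult a (monom 1 0)) < 1" "degree (smult b (monom 1 0)) < 1" "degree (0::complex poly) < 1"
      for i :: nat by (simp_all add: deg_sm)
    show "phi 1 ?e (smult a (monom 1 0)) = X (?e i)" if "i < 1" for i
      using phi_monom[of 0 1 ?e a] a v by simp
    show "phi 1 ?e (smult b (monom 1 0)) = Y (?e i)" if "i < 1" for i
      using phi_monom[of 0 1 ?e b] b v by simp
    show "phi 1 ?e 0 = H (?e i)" if "i < 1" for i
      using phi_0 Hz v by simp
  qed
  then show ?thesis unfolding modA_X_def modA_Y_def modA_H_def by blast
qed


lemma Xn_unfold: "(X ^^ n) u = X ((X ^^ (n - 1)) u)"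
proof -
  obtain k where "n = Suc k" using n1 by (cases n) auto
  then show ?thesis by simp
qed

lemma Xn_unfold2: "v \<in> V \<Longrightarrow> (X ^^ n) v = (X ^^ (n - 1)) (X v)"
proof -
  obtain k where "n = Suc k" using n1 by (cases n) auto
  then show ?thesis by (simp add: funpow_swap1)
qed

lemma Yn_unfold: "(Y ^^ n) u = Y ((Y ^^ (n - 1)) u)"
proof -
  obtain k where "n = Suc k" using n1 by (cases n) auto
  then show ?thesis by simp
qed

lemma case_b:
  assumes v: "v \<in> V" "v \<noteq> 0" "H v = l *s v" and l: "l \<noteq> 0"
    and a: "\<forall>u\<in>V. (X ^^ n) u = \<alpha> *s u" and a0: "\<alpha> \<noteq> 0"
    and C: "\<forall>u\<in>V. Cop u = \<gamma> *s u"
  shows "\<exists>a b z. a \<noteq> 0 \<and> b \<noteq> 0 \<and>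
     H_iso smult (polys_below n) (modB_X n w a b) (modB_Y n w a b z) (modB_H n w a b) sc V X Y H"
proof -
  define e where "e i = (X ^^ i) v" for i
  have eV: "e i \<in> V" for i unfolding e_def using XkV v by blast
  have n0: "0 < n" using n1 by simp
  have enz: "e i \<noteq> 0" if "i < n" for i
  proof
    assume "e i = 0"
    have "(X ^^ n) v = (X ^^ (n - i)) ((X ^^ i) v)" using that by (intro pow_split) simp
    also have "\<dots> = 0" using \<open>e i = 0\<close> powT_zero[OF linX] unfolding e_def by simp
    finally show False using a v a0 by simp
  qed
  have eig: "H (e i) = (w ^ i * l) *s e i" for i unfolding e_def using eigX[OF v(1,3)] .
  have indep: "\<forall>i<n. c i = 0" if "(\<Sum>i<n. c i *s e i) = 0" for c
  proof (rule indep_eig[OF _ _ _ _ that])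
    show "\<And>i. i < n \<Longrightarrow> e i \<in> V" using eV by blast
    show "\<And>i. i < n \<Longrightarrow> e i \<noteq> 0" using enz by blast
    show "\<And>i. i < n \<Longrightarrow> H (e i) = (w ^ i * l) *s e i" using eig by blast
    show "\<And>i j. i < n \<Longrightarrow> j < n \<Longrightarrow> w ^ i * l = w ^ j * l \<Longrightarrow> i = j" using w_inj l by simp
  qed
  have "H_iso smult (polys_below n) (lin_ext n (\<lambda>i. qpow n \<alpha> (int i + 1)))
     (lin_ext n (\<lambda>i. smult (l * w ^ i + \<gamma>) (qpow n \<alpha> (int i - 1))))
     (lin_ext n (\<lambda>i. smult (l * w ^ i) (qpow n \<alpha> (int i)))) sc V X Y H"
  proof (rule iso_basis[OF n0])
    show "\<And>i. i < n \<Longrightarrow> e i \<in> V" using eV by blast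
    show "e 0 \<noteq> 0" using enz n0 by blast
    show "\<And>c. (\<Sum>i<n. c i *s e i) = 0 \<Longrightarrow> \<forall>i<n. c i = 0" using indep by blast
    show "\<And>i. i < n \<Longrightarrow> degree (qpow n \<alpha> (int i + 1)) < n" using deg_qpow[OF n0] by blast
    show "\<And>i. i < n \<Longrightarrow> degree (smult (l * w ^ i + \<gamma>) (qpow n \<alpha> (int i - 1))) < n"
      using deg_sqpow[OF n0] by blast
    show "\<And>i. i < n \<Longrightarrow> degree (smult (l * w ^ i) (qpow n \<alpha> (int i))) < n"
      using deg_sqpow[OF n0] by blast
  next
    fix i assume i: "i < n"
    show "phi n e (smult (l * w ^ i) (qpow n \<alpha> (int i))) = H (e i)"
      using qpow_lt[OF i] phi_monom[OF i] eig by (simp add: mult.commute)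
  next
    fix i assume i: "i < n"
    show "phi n e (qpow n \<alpha> (int i + 1)) = X (e i)"
    proof (cases "Suc i < n")
      case True
      then show ?thesis using qpow_Suc[OF True] phi_monom1[OF True] unfolding e_def by simp
    next
      case False
      then have si: "Suc i = n" using i by simp
      have "phi n e (qpow n \<alpha> (int i + 1)) = \<alpha> *s e 0"
        using qpow_last[OF si] phi_monom[OF n0] by simp
      also have "\<dots> = (X ^^ n) v" using a v unfolding e_def by simp
      also have "\<dots> = X (e i)" using si unfolding e_def by (metis funpow.simps(2) comp_apply)
      finally show ?thesis .
    qed
  next
    fix i assume i: "i < n"
    show "phi n e (smult (l * w ^ i + \<gamma>) (qpow n \<alpha> (int i - 1))) = Y (e i)"
    proof (cases i)
      case (Suc j)
      have j: "j < n" using i Suc by simp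
      have "qpow n \<alpha> (int i - 1) = monom 1 j" using qpow_pred[of i n] i Suc by simp
      then have "phi n e (smult (l * w ^ i + \<gamma>) (qpow n \<alpha> (int i - 1))) = (l * w ^ i + \<gamma>) *s e j"
        using phi_monom[OF j] by simp
      also have "\<dots> = \<gamma> *s e j + w *s H (e j)"
        using eig[of j] Suc by (simp add: scale_left_distrib algebra_simps)
      also have "\<dots> = Y (X (e j))" using YX_C[OF C eV] by simp
      also have "X (e j) = e i" unfolding e_def Suc by simp
      finally show ?thesis .
    next
      case 0
      have n1': "n - 1 < n" using n0 by simp
      have q: "qpow n \<alpha> (int i - 1) = smult (inverse \<alpha>) (monom 1 (n - 1))" using qpow_m1[OF n0] 0 by simp
      have "phi n e (smult (l * w ^ i + \<gamma>) (qpow n \<alpha> (int i - 1))) = ((l + \<gamma>) * inverse \<alpha>) *s e (n - 1)"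
        unfolding q using phi_monom[OF n1'] 0 by simp
      moreover have "\<alpha> *s Y v = (l + \<gamma>) *s e (n - 1)"
      proof -
        have "\<alpha> *s Y v = (X ^^ n) (Y v)" using a YV v by simp
        also have "\<dots> = (X ^^ (n - 1)) (X (Y v))" using Xn_unfold2 YV v by simp
        also have "X (Y v) = (l + \<gamma>) *s v" using XY_C[OF C v(1)] v by (simp add: scale_left_distrib)
        finally show ?thesis using Xk_sc v unfolding e_def by simp
      qed
      then have "inverse \<alpha> *s (\<alpha> *s Y v) = inverse \<alpha> *s ((l + \<gamma>) *s e (n - 1))" by simp
      then have "Y v = ((l + \<gamma>) * inverse \<alpha>) *s e (n - 1)" using a0 by (simp add: mult.commute)
      ultimately show ?thesis using 0 unfolding e_def by simp
    qed
  qed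
  then show ?thesis unfolding modB_X_def modB_Y_def modB_H_def using a0 l
    by (intro exI[of _ \<alpha>] exI[of _ l] exI[of _ \<gamma>]) simp
qed

lemma winv: "i \<le> n \<Longrightarrow> inverse w ^ (n - i) = w ^ i"
proof -
  assume i: "i \<le> n"
  have "w ^ i * w ^ (n - i) = 1" using i w_facts(1) by (simp add: power_add[symmetric])
  then have "w ^ i = inverse (w ^ (n - i))" using w_facts(2) by (simp add: field_simps)
  then show ?thesis by (simp add: power_inverse)
qed

lemma case_c:
  assumes v: "v \<in> V" "v \<noteq> 0" "H v = l *s v" and l: "l \<noteq> 0"
    and a: "\<forall>u\<in>V. (X ^^ n) u = 0"
    and a': "\<forall>u\<in>V. (Y ^^ n) u = \<alpha> *s u" and a0: "\<alpha> \<noteq> 0"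
    and C: "\<forall>u\<in>V. Cop u = \<gamma> *s u"
  shows "\<exists>a b j. a \<noteq> 0 \<and> b \<noteq> 0 \<and>
     H_iso smult (polys_below n) (modC_X n w a b j) (modC_Y n w a) (modC_H n w a b) sc V X Y H"
proof -
  have n0: "0 < n" using n1 by simp
  have ex: "\<exists>k. (X ^^ k) v = 0" using a v by blast
  define k0 where "k0 = (LEAST k. (X ^^ k) v = 0)"
  have k0: "(X ^^ k0) v = 0" unfolding k0_def using LeastI_ex[OF ex] .
  have k00: "k0 \<noteq> 0" using k0 v by (cases k0) auto
  define u where "u = (X ^^ (k0 - 1)) v"
  have uV: "u \<in> V" unfolding u_def using XkV v by blast
  have lt: "k0 - 1 < (LEAST k. (X ^^ k) v = 0)" using k00 unfolding k0_def[symmetric] by simp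
  have unz: "u \<noteq> 0" unfolding u_def using not_less_Least[OF lt] .
  have Xu: "X u = 0" unfolding u_def using k0 k00 by (cases k0) auto
  have Hu: "H u = (w ^ (k0 - 1) * l) *s u" unfolding u_def using eigX[OF v(1,3)] .
  have "0 = Y (X u)" using Xu lin_zero[OF subV linY] by simp
  also have "\<dots> = \<gamma> *s u + w *s H u" using YX_C[OF C uV] .
  also have "\<dots> = (\<gamma> + w * (w ^ (k0 - 1) * l)) *s u" using Hu by (simp add: scale_left_distrib)
  finally have "\<gamma> + w * (w ^ (k0 - 1) * l) = 0" using unz by simp
  moreover have "w * w ^ (k0 - 1) = w ^ k0" using k00 by (cases k0) auto
  ultimately have "\<gamma> + l * w ^ k0 = 0" by (simp add: algebra_simps)
  then have gam: "\<gamma> = - (l * w ^ k0)" by (simp add: eq_neg_iff_add_eq_0)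
  define e where "e i = inverse \<alpha> *s (Y ^^ (n - i)) v" for i
  have eV: "e i \<in> V" for i unfolding e_def using YkV v scV by blast
  have e0: "e 0 = v" unfolding e_def using a' v a0 by simp
  have enz: "e i \<noteq> 0" if "i < n" for i
  proof
    assume "e i = 0"
    then have z: "(Y ^^ (n - i)) v = 0" unfolding e_def using a0 by simp
    have "(Y ^^ n) v = (Y ^^ (n - (n - i))) ((Y ^^ (n - i)) v)" by (intro pow_split) simp
    also have "\<dots> = 0" using z powT_zero[OF linY] by simp
    finally show False using a' v a0 by simp
  qed
  have eig: "H (e i) = (w ^ i * l) *s e i" if "i \<le> n" for i
  proof -
    have "H (e i) = inverse \<alpha> *s H ((Y ^^ (n - i)) v)" unfolding e_def using H_sc YkV v by simp
    also have "\<dots> = inverse \<alpha> *s ((inverse w ^ (n - i) * l) *s (Y ^^ (n - i)) v)"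
      using eigY[OF v(1,3)] by simp
    also have "\<dots> = (w ^ i * l) *s e i" unfolding e_def winv[OF that] by (simp add: mult.commute)
    finally show ?thesis .
  qed
  have Ye: "Y (e i) = e (i - 1)" if "0 < i" "i \<le> n" for i
  proof -
    have "Y (e i) = inverse \<alpha> *s Y ((Y ^^ (n - i)) v)" unfolding e_def using Y_sc YkV v by simp
    also have "n - (i - 1) = Suc (n - i)" using that by simp
    then have "Y ((Y ^^ (n - i)) v) = (Y ^^ (n - (i - 1))) v" by simp
    finally show ?thesis unfolding e_def .
  qed
  have indep: "\<forall>i<n. c i = 0" if "(\<Sum>i<n. c i *s e i) = 0" for c
  proof (rule indep_eig[OF _ _ _ _ that])
    show "\<And>i. i < n \<Longrightarrow> e i \<in> V" using eV by blast
    show "\<And>i. i < n \<Longrightarrow> e i \<noteq> 0" using enz by blast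
    show "\<And>i. i < n \<Longrightarrow> H (e i) = (w ^ i * l) *s e i" using eig by simp
    show "\<And>i j. i < n \<Longrightarrow> j < n \<Longrightarrow> w ^ i * l = w ^ j * l \<Longrightarrow> i = j" using w_inj l by simp
  qed
  define A where "A = inverse \<alpha>"
  have A0: "A \<noteq> 0" unfolding A_def using a0 by simp
  have "H_iso smult (polys_below n)
     (lin_ext n (\<lambda>i. smult (l * (w ^ (i + 1) - w powi (int k0))) (qpow n A (int i + 1))))
     (lin_ext n (\<lambda>i. qpow n A (int i - 1)))
     (lin_ext n (\<lambda>i. smult (l * w ^ i) (qpow n A (int i)))) sc V X Y H"
  proof (rule iso_basis[OF n0])
    show "\<And>i. i < n \<Longrightarrow> e i \<in> V" using eV by blast
    show "e 0 \<noteq> 0" using enz n0 by blast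
    show "\<And>c. (\<Sum>i<n. c i *s e i) = 0 \<Longrightarrow> \<forall>i<n. c i = 0" using indep by blast
    show "\<And>i. i < n \<Longrightarrow> degree (qpow n A (int i - 1)) < n" using deg_qpow[OF n0] by blast
    show "\<And>i. i < n \<Longrightarrow> degree (smult (l * (w ^ (i + 1) - w powi (int k0))) (qpow n A (int i + 1))) < n"
      using deg_sqpow[OF n0] by blast
    show "\<And>i. i < n \<Longrightarrow> degree (smult (l * w ^ i) (qpow n A (int i))) < n"
      using deg_sqpow[OF n0] by blast
  next
    fix i assume i: "i < n"
    show "phi n e (smult (l * w ^ i) (qpow n A (int i))) = H (e i)"
      using qpow_lt[OF i] phi_monom[OF i] eig[of i] i by (simp add: mult.commute)
  next
    fix i assume i: "i < n"
    show "phi n e (qpow n A (int i - 1)) = Y (e i)"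
    proof (cases i)
      case (Suc j)
      have j: "j < n" using i Suc by simp
      have "qpow n A (int i - 1) = monom 1 j" using qpow_pred[of i n] i Suc by simp
      then show ?thesis using phi_monom1[OF j] Ye[of i] i Suc by simp
    next
      case 0
      have n1': "n - 1 < n" using n0 by simp
      have q: "qpow n A (int i - 1) = smult \<alpha> (monom 1 (n - 1))"
        using qpow_m1[OF n0, of A] 0 unfolding A_def by simp
      have "phi n e (qpow n A (int i - 1)) = \<alpha> *s e (n - 1)" unfolding q using phi_monom[OF n1'] by simp
      also have "\<dots> = (Y ^^ (n - (n - 1))) v" unfolding e_def using a0 by simp
      also have "n - (n - 1) = 1" using n0 by simp
      finally show ?thesis using e0 0 by simp
    qed
  next
    fix i assume i: "i < n"
    let ?c = "l * (w ^ (i + 1) - w powi (int k0))"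
    have pk: "w powi (int k0) = w ^ k0" by (simp add: power_int_of_nat)
    show "phi n e (smult ?c (qpow n A (int i + 1))) = X (e i)"
    proof (cases "Suc i < n")
      case True
      have "phi n e (smult ?c (qpow n A (int i + 1))) = ?c *s e (Suc i)"
        using qpow_Suc[OF True] phi_monom[OF True] by simp
      also have "\<dots> = \<gamma> *s e (Suc i) + H (e (Suc i))"
        using eig[of "Suc i"] True gam pk by (simp add: scale_left_distrib algebra_simps)
      also have "\<dots> = X (Y (e (Suc i)))" using XY_C[OF C eV] by simp
      also have "Y (e (Suc i)) = e i" using Ye[of "Suc i"] True by simp
      finally show ?thesis .
    next
      case False
      then have si: "Suc i = n" using i by simp
      have "phi n e (smult ?c (qpow n A (int i + 1))) = (?c * A) *s e 0"
        using qpow_last[OF si] phi_monom[OF n0] by simp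
      also have "?c * A = (l + \<gamma>) * A" using si w_facts(1) gam pk by (simp add: algebra_simps)
      also have "((l + \<gamma>) * A) *s e 0 = A *s X (Y v)"
        using XY_C[OF C v(1)] v e0 by (simp add: scale_left_distrib algebra_simps)
      also have "A *s X (Y v) = X (e i)"
      proof -
        have "n - i = 1" using si by simp
        then have "e i = A *s Y v" unfolding e_def A_def by simp
        then show ?thesis using X_sc YV v by simp
      qed
      finally show ?thesis .
    qed
  qed
  then show ?thesis unfolding modC_X_def modC_Y_def modC_H_def using A0 l
    by (intro exI[of _ A] exI[of _ l] exI[of _ "int k0"]) simp
qed

lemma case_d:
  assumes v: "v \<in> V" "v \<noteq> 0" "H v = l *s v" and l: "l \<noteq> 0"
    and a: "\<forall>u\<in>V. (X ^^ n) u = 0"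
    and a': "\<forall>u\<in>V. (Y ^^ n) u = 0"
    and C: "\<forall>u\<in>V. Cop u = \<gamma> *s u"
  shows "\<exists>z. z \<noteq> 0 \<and> H_iso smult (polys_below n) (modD_X n) (modD_Y n w z) (modD_H n w z) sc V X Y H"
proof -
  have n0: "0 < n" using n1 by simp
  have ex: "\<exists>k. (Y ^^ k) v = 0" using a' v by blast
  define k1 where "k1 = (LEAST k. (Y ^^ k) v = 0)"
  have k1: "(Y ^^ k1) v = 0" unfolding k1_def using LeastI_ex[OF ex] .
  have k10: "k1 \<noteq> 0" using k1 v by (cases k1) auto
  define u where "u = (Y ^^ (k1 - 1)) v"
  have uV: "u \<in> V" unfolding u_def using YkV v by blast
  have lt: "k1 - 1 < (LEAST k. (Y ^^ k) v = 0)" using k10 unfolding k1_def[symmetric] by simp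
  have unz: "u \<noteq> 0" unfolding u_def using not_less_Least[OF lt] .
  have Yu: "Y u = 0" unfolding u_def using k1 k10 by (cases k1) auto
  define \<mu> where "\<mu> = inverse w ^ (k1 - 1) * l"
  have mu0: "\<mu> \<noteq> 0" unfolding \<mu>_def using l w_facts(2) by simp
  have Hu: "H u = \<mu> *s u" unfolding u_def \<mu>_def using eigY[OF v(1,3)] .
  have "0 = X (Y u)" using Yu lin_zero[OF subV linX] by simp
  also have "\<dots> = \<gamma> *s u + H u" using XY_C[OF C uV] .
  also have "\<dots> = (\<gamma> + \<mu>) *s u" using Hu by (simp add: scale_left_distrib)
  finally have "\<gamma> + \<mu> = 0" using unz by simp
  then have gam: "\<gamma> = - \<mu>" by (simp add: eq_neg_iff_add_eq_0)
  define e where "e i = (X ^^ i) u" for i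
  have eV: "e i \<in> V" for i unfolding e_def using XkV uV by blast
  have eig: "H (e i) = (w ^ i * \<mu>) *s e i" for i unfolding e_def using eigX[OF uV Hu] .
  have Ye: "Y (e (Suc j)) = (\<mu> * (w ^ Suc j - 1)) *s e j" for j
  proof -
    have "Y (e (Suc j)) = Y (X (e j))" unfolding e_def by simp
    also have "\<dots> = \<gamma> *s e j + w *s H (e j)" using YX_C[OF C eV] .
    also have "\<dots> = (\<mu> * (w ^ Suc j - 1)) *s e j"
      using eig[of j] gam by (simp add: scale_left_distrib algebra_simps)
    finally show ?thesis .
  qed
  have enz: "e i \<noteq> 0" if i: "i < n" for i
  proof
    assume ei: "e i = 0"
    have ex2: "\<exists>m. e m = 0" using ei by blast
    define m0 where "m0 = (LEAST m. e m = 0)"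
    have m0: "e m0 = 0" unfolding m0_def using LeastI_ex[OF ex2] .
    have m0i: "m0 \<le> i" unfolding m0_def using ei by (rule Least_le)
    have m00: "m0 \<noteq> 0" using m0 unz unfolding e_def by (cases m0) auto
    have lt2: "m0 - 1 < (LEAST m. e m = 0)" using m00 unfolding m0_def[symmetric] by simp
    have em: "e (m0 - 1) \<noteq> 0" using not_less_Least[OF lt2] .
    have "Y (e m0) = 0" using m0 lin_zero[OF subV linY] by simp
    moreover have "Y (e m0) = (\<mu> * (w ^ m0 - 1)) *s e (m0 - 1)" using Ye[of "m0 - 1"] m00 by simp
    ultimately have "w ^ m0 = 1" using em mu0 by simp
    then show False using w_pow_ne[of m0] m00 m0i i by simp
  qed
  have indep: "\<forall>i<n. c i = 0" if "(\<Sum>i<n. c i *s e i) = 0" for c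
  proof (rule indep_eig[OF _ _ _ _ that])
    show "\<And>i. i < n \<Longrightarrow> e i \<in> V" using eV by blast
    show "\<And>i. i < n \<Longrightarrow> e i \<noteq> 0" using enz by blast
    show "\<And>i. i < n \<Longrightarrow> H (e i) = (w ^ i * \<mu>) *s e i" using eig by simp
    show "\<And>i j. i < n \<Longrightarrow> j < n \<Longrightarrow> w ^ i * \<mu> = w ^ j * \<mu> \<Longrightarrow> i = j" using w_inj mu0 by simp
  qed
  define z where "z = - \<mu>"
  have z0: "z \<noteq> 0" unfolding z_def using mu0 by simp
  have "H_iso smult (polys_below n)
     (lin_ext n (\<lambda>i. if i + 1 < n then monom 1 (i + 1) else 0))
     (lin_ext n (\<lambda>i. if i = 0 then 0 else smult ((1 - w ^ i) * z) (monom 1 (i - 1))))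
     (lin_ext n (\<lambda>i. smult (- (w ^ i) * z) (monom 1 i))) sc V X Y H"
  proof (rule iso_basis[OF n0])
    show "\<And>i. i < n \<Longrightarrow> e i \<in> V" using eV by blast
    show "e 0 \<noteq> 0" using enz n0 by blast
    show "\<And>c. (\<Sum>i<n. c i *s e i) = 0 \<Longrightarrow> \<forall>i<n. c i = 0" using indep by blast
    show "degree (if i + 1 < n then monom (1::complex) (i + 1) else 0) < n" if "i < n" for i
      using deg_sm[of "i+1" n 1] n0 by simp
    show "degree (if i = 0 then 0 else smult ((1 - w ^ i) * z) (monom 1 (i - 1))) < n" if "i < n" for i
      using deg_sm[of "i - 1" n "(1 - w ^ i) * z"] n0 that by (cases "i = 0") auto
    show "degree (smult (- (w ^ i) * z) (monom 1 i)) < n" if "i < n" for i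
      using deg_sm[OF that] by blast
  next
    fix i assume i: "i < n"
    show "phi n e (smult (- (w ^ i) * z) (monom 1 i)) = H (e i)"
      using phi_monom[OF i] eig[of i] unfolding z_def by simp
  next
    fix i assume i: "i < n"
    show "phi n e (if i + 1 < n then monom 1 (i + 1) else 0) = X (e i)"
    proof (cases "i + 1 < n")
      case True
      then show ?thesis using phi_monom1[OF True] unfolding e_def by simp
    next
      case False
      then have "Suc i = n" using i by simp
      then have "X (e i) = (X ^^ n) u" unfolding e_def by (metis funpow.simps(2) comp_apply)
      then have "X (e i) = 0" using a uV by simp
      then show ?thesis using False phi_0 by simp
    qed
  next
    fix i assume i: "i < n"
    show "phi n e (if i = 0 then 0 else smult ((1 - w ^ i) * z) (monom 1 (i - 1))) = Y (e i)"
    proof (cases i)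
      case 0
      then show ?thesis using phi_0 Yu unfolding e_def by simp
    next
      case (Suc j)
      have j: "j < n" using i Suc by simp
      show ?thesis using phi_monom[OF j] Ye[of j] Suc unfolding z_def by (simp add: algebra_simps)
    qed
  qed
  then show ?thesis unfolding modD_X_def modD_Y_def modD_H_def using z0
    by (intro exI[of _ z]) simp
qed
end


context hm
begin

lemma classify:
  "(\<exists>a b. H_iso smult (polys_below 1) (modA_X a) (modA_Y b) modA_H sc V X Y H)
   \<or> (\<exists>a b z. a \<noteq> 0 \<and> b \<noteq> 0 \<and>
        H_iso smult (polys_below n) (modB_X n w a b) (modB_Y n w a b z) (modB_H n w a b) sc V X Y H)
   \<or> (\<exists>a b j. a \<noteq> 0 \<and> b \<noteq> 0 \<and>
        H_iso smult (polys_below n) (modC_X n w a b j) (modC_Y n w a) (modC_H n w a b) sc V X Y H)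
   \<or> (\<exists>z. z \<noteq> 0 \<and> H_iso smult (polys_below n) (modD_X n) (modD_Y n w z) (modD_H n w z) sc V X Y H)"
proof -
  obtain v l where v: "v \<in> V" "v \<noteq> 0" "H v = l *s v" using eigvec by blast
  obtain \<alpha> where a: "\<forall>u\<in>V. (X ^^ n) u = \<alpha> *s u" using Xn_scalar by blast
  obtain \<alpha>' where a': "\<forall>u\<in>V. (Y ^^ n) u = \<alpha>' *s u" using Yn_scalar by blast
  obtain \<gamma> where C: "\<forall>u\<in>V. Cop u = \<gamma> *s u" using C_scalar by blast
  show ?thesis
  proof (cases "l = 0")
    case True
    then show ?thesis using case_a[OF v(1,2)] v(3) by simp
  next
    case l: False
    show ?thesis
    proof (cases "\<alpha> = 0")
      case False
      then show ?thesis using case_b[OF v l a False C] by blast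
    next
      case a0: True
      then have a00: "\<forall>u\<in>V. (X ^^ n) u = 0" using a by simp
      show ?thesis
      proof (cases "\<alpha>' = 0")
        case False
        then show ?thesis using case_c[OF v l a00 a' False C] by blast
      next
        case True
        then have "\<forall>u\<in>V. (Y ^^ n) u = 0" using a' by simp
        then show ?thesis using case_d[OF v l a00 _ C] by blast
      qed
    qed
  qed
qed

end

lemma (in cvs) op_poly_lin:
  "w \<noteq> 0 \<Longrightarrow> op_poly scale [:c, w:] T v = c *s v + w *s T v"
  by (simp add: op_poly_def)

lemma to_hm:
  fixes sc :: "complex \<Rightarrow> 'v::ab_group_add \<Rightarrow> 'v" (infixr \<open>*s\<close> 75)
  assumes n: "n > 1" and prim: "primitive_root_of_unity n w"
    and M: "H_module sc V [:c, w:] X Y H" and S: "H_simple sc V X Y H"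
  shows "hm sc V X Y (\<lambda>v. H v - sc (c / (1 - w)) v) w n"
proof -
  have vs: "vector_space sc" using M unfolding H_module_def by blast
  interpret cvs sc unfolding cvs_def by (rule vs)
  have w0: "w \<noteq> 0" and w1: "w \<noteq> 1"
  proof -
    have wn: "w ^ n = 1" using prim unfolding primitive_root_of_unity_def by blast
    show "w \<noteq> 0"
    proof
      assume "w = 0"
      then have "w ^ n = 0" using n by simp
      then show False using wn by simp
    qed
    have "0 < (1::nat) \<and> 1 < n \<longrightarrow> w ^ 1 \<noteq> 1" using prim unfolding primitive_root_of_unity_def by blast
    then show "w \<noteq> 1" using n by simp
  qed
  define h0 where "h0 = c / (1 - w)"
  have "1 - w \<noteq> 0" using w1 by simp
  then have "c = h0 * (1 - w)" unfolding h0_def by simp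
  then have ch: "c = h0 - w * h0" by (simp add: algebra_simps)
  let ?H = "\<lambda>v. H v - h0 *s v"
  have subV: "subspace V" and linX: "lin_op_on sc V X" and linY: "lin_op_on sc V Y"
    and linH: "lin_op_on sc V H"
    and m1: "\<forall>v\<in>V. H (X v) = X (c *s v + w *s H v)"
    and m2: "\<forall>v\<in>V. Y (H v) = c *s Y v + w *s H (Y v)"
    and m3: "\<forall>v\<in>V. Y (X v) - X (Y v) = c *s v + w *s H v - H v"
    using M unfolding H_module_def op_poly_lin[OF w0] by blast+
  have key: "w *s (u - h0 *s v) = c *s v + w *s u - h0 *s v" for u v
    unfolding ch by (simp add: algebra_simps scale_left_diff_distrib scale_right_diff_distrib)
  show ?thesis unfolding h0_def[symmetric]
  proof (unfold_locales)
    show "subspace V" by (rule subV)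
    show "lin_op_on sc V X" "lin_op_on sc V Y" by (rule linX, rule linY)
    show "lin_op_on sc V ?H" by (rule lin_shift[OF subV linH])
    show "1 < n" by (rule n)
    show "primitive_root_of_unity n w" by (rule prim)
  next
    fix v assume v: "v \<in> V"
    have sv: "h0 *s v \<in> V" "H v \<in> V" using v subV linH by (auto intro: subspace_scale lin_in)
    have "X (w *s (H v - h0 *s v)) = X (c *s v + w *s H v - h0 *s v)" unfolding key ..
    also have "\<dots> = X (c *s v + w *s H v) - X (h0 *s v)"
      using v sv subV by (intro lin_diff[OF subV linX]) (auto intro: subspace_scale subspace_add)
    also have "\<dots> = H (X v) - h0 *s X v" using m1 v lin_scale[OF linX v] by simp
    finally show "?H (X v) = X (w *s ?H v)" by simp
  next
    fix v assume v: "v \<in> V"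
    have yv: "Y v \<in> V" using v linY lin_in by blast
    have sv: "h0 *s v \<in> V" "H v \<in> V" using v subV linH by (auto intro: subspace_scale lin_in)
    have "Y (?H v) = Y (H v) - Y (h0 *s v)" using lin_diff[OF subV linY sv(2,1)] by simp
    also have "\<dots> = Y (H v) - h0 *s Y v" using lin_scale[OF linY v] by simp
    also have "\<dots> = c *s Y v + w *s H (Y v) - h0 *s Y v" using m2 v by simp
    also have "\<dots> = w *s (H (Y v) - h0 *s Y v)" unfolding key ..
    finally show "Y (?H v) = w *s ?H (Y v)" .
  next
    fix v assume v: "v \<in> V"
    have "Y (X v) - X (Y v) = c *s v + w *s H v - H v" using m3 v by simp
    also have "\<dots> = (w - 1) *s (H v - h0 *s v)" unfolding ch
      by (simp add: algebra_simps scale_left_diff_distrib scale_right_diff_distrib)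
    finally show "Y (X v) - X (Y v) = (w - 1) *s ?H v" .
  next
    show "H_simple sc V X Y ?H"
      unfolding H_simple_def
    proof (intro conjI allI impI)
      show "V \<noteq> {0}" using S unfolding H_simple_def by blast
      fix W assume W: "W \<subseteq> V \<and> subspace W \<and> (\<forall>x\<in>W. X x \<in> W \<and> Y x \<in> W \<and> ?H x \<in> W)"
      have "\<forall>x\<in>W. H x \<in> W"
      proof
        fix x assume x: "x \<in> W"
        have "?H x + h0 *s x \<in> W" using W x by (intro subspace_add subspace_scale) auto
        then show "H x \<in> W" by simp
      qed
      then show "W = {0} \<or> W = V" using S W unfolding H_simple_def by blast
    qed
  qed
qed

theorem mainTheorem14:
  fixes n :: nat and w c :: complex
  assumes "n > 1" and "primitive_root_of_unity n w"
  shows "(\<forall>(sc :: complex \<Rightarrow> 'v::ab_group_add \<Rightarrow> 'v) V X Y H.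
            H_module sc V [:c, w:] X Y H \<and> H_simple sc V X Y H \<longrightarrow> fin_dim sc V)
       \<and> (\<forall>(sc :: complex \<Rightarrow> 'v \<Rightarrow> 'v) V X Y H.
            H_module sc V [:0, w:] X Y H \<and> H_simple sc V X Y H \<and> fin_dim sc V \<longrightarrow>
              (\<exists>a b. H_iso smult (polys_below 1) (modA_X a) (modA_Y b) modA_H sc V X Y H)
            \<or> (\<exists>a b z. a \<noteq> 0 \<and> b \<noteq> 0 \<and>
                 H_iso smult (polys_below n) (modB_X n w a b) (modB_Y n w a b z) (modB_H n w a b)
                       sc V X Y H)
            \<or> (\<exists>a b j. a \<noteq> 0 \<and> b \<noteq> 0 \<and>
                 H_iso smult (polys_below n) (modC_X n w a b j) (modC_Y n w a) (modC_H n w a b)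
                       sc V X Y H)
            \<or> (\<exists>z. z \<noteq> 0 \<and>
                 H_iso smult (polys_below n) (modD_X n) (modD_Y n w z) (modD_H n w z)
                       sc V X Y H))"
proof (intro conjI allI impI)
  fix sc :: "complex \<Rightarrow> 'v::ab_group_add \<Rightarrow> 'v" and V X Y H
  assume a: "H_module sc V [:c, w:] X Y H \<and> H_simple sc V X Y H"
  then have "hm sc V X Y (\<lambda>v. H v - sc (c / (1 - w)) v) w n"
    using to_hm[OF assms] by blast
  then show "fin_dim sc V" by (rule hm.fin)
next
  fix sc :: "complex \<Rightarrow> 'v::ab_group_add \<Rightarrow> 'v" and V X Y H
  assume a: "H_module sc V [:0, w:] X Y H \<and> H_simple sc V X Y H \<and> fin_dim sc V"
  then have h: "hm sc V X Y (\<lambda>v. H v - sc (0 / (1 - w)) v) w n"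
    using to_hm[OF assms, of sc V 0 X Y H] by blast
  have vs: "vector_space sc" using a unfolding H_module_def by blast
  interpret vector_space sc by (rule vs)
  have "(\<lambda>v. H v - sc (0 / (1 - w)) v) = H" by simp
  then have "hm sc V X Y H w n" using h by simp
  then show "(\<exists>a b. H_iso smult (polys_below 1) (modA_X a) (modA_Y b) modA_H sc V X Y H)
            \<or> (\<exists>a b z. a \<noteq> 0 \<and> b \<noteq> 0 \<and>
                 H_iso smult (polys_below n) (modB_X n w a b) (modB_Y n w a b z) (modB_H n w a b)
                       sc V X Y H)
            \<or> (\<exists>a b j. a \<noteq> 0 \<and> b \<noteq> 0 \<and>
                 H_iso smult (polys_below n) (modC_X n w a b j) (modC_Y n w a) (modC_H n w a b)
                       sc V X Y H)
            \<or> (\<exists>z. z \<noteq> 0 \<and>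
                 H_iso smult (polys_below n) (modD_X n) (modD_Y n w z) (modD_H n w z)
                       sc V X Y H)"
    by (rule hm.classify)
qed

end
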